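(* Let $\Lambda=C_{K,L}$ be the $K\times L$ cylindrical grid ($K,L\ge2$, $K$ even) and $(\mathcal X,H,q)$ the hard-core energy landscape on it. Then (a) $\widetilde\Gamma(\mathcal X\setminus\{\mathbf e,\mathbf o\})\le\min\{K/2,L\}$; (b) $\Gamma(\mathbf e,\{\mathbf o\})=\min\{K/2,L\}+1=\widetilde\Gamma(\mathcal X\setminus\{\mathbf o\})$.
   Context: Cylindrical grid $C_{K,L}$: sites $(v_1,v_2)$ with $0\le v_1\le L-1$, $0\le v_2\le K-1$; $v,w$ adjacent iff $|v_1-w_1|+|v_2-w_2|=1$, or $v_1=w_1$ and $\{v_2,w_2\}=\{0,K-1\}$ (each column is a cycle). Even sites: $v_1+v_2$ even. Hard-core landscape: $\mathcal X$ = set of $\sigma\in\{0,1\}^\Lambda$ with $\sigma(v)\sigma(w)=0$ for adjacent $v,w$; $H(\sigma)=-\sum_v\sigma(v)$; $q(\sigma,\sigma')=1/(KL)$ if $\sigma,\sigma'$ differ in exactly one site, $0$ if in more, $q(\sigma,\sigma)=1-\sum_{\eta\ne\sigma}q(\sigma,\eta)$. $\mathbf e$ (resp. $\mathbf o$) has particles exactly at even (resp. odd) sites. Paths: finite sequences with consecutive $q>0$; $\Phi(x,y)$ = minimum over paths from $x$ to $y$ of the maximal $H$ along the path; $\Phi(B,D)=\min_{x\in B,y\in D}\Phi(x,y)$. $\partial B=\{y\notin B:\exists x\in B,q(x,y)>0\}$. A cycle is a nonempty $C$ which is a singleton or a set of at least two elements, connected by paths inside it, with $\max_CH<\min_{\partial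 C}H$; depth $\Gamma(C)=\Phi(C,\mathcal X\setminus C)-\min_CH$. $C_A(x)=\{x\}\cup\{z:\Phi(x,z)<\Phi(x,A)\}$, $\Gamma(x,A)=\Gamma(C_A(x))$. For nonempty $B\subsetneq\mathcal X$, $\widetilde\Gamma(B)=\max\{\Gamma(C):C$ maximal cycle contained in $B\}$. *)

theory Defs
  imports Complex_Main
begin

definition is_path :: "'a set \<Rightarrow> ('a \<Rightarrow> 'a \<Rightarrow> real) \<Rightarrow> 'a list \<Rightarrow> bool" where
  "is_path X q p \<longleftrightarrow> p \<noteq> [] \<and> set p \<subseteq> X \<and>
     (\<forall>i. Suc i < length p \<longrightarrow> q (p ! i) (p ! Suc i) > 0)"

definition Phi :: "'a set \<Rightarrow> ('a \<Rightarrow> int) \<Rightarrow> ('a \<Rightarrow> 'a \<Rightarrow> real) \<Rightarrow> 'a \<Rightarrow> 'a \<Rightarrow> int" where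
  "Phi X H q x y = Min {Max (H ` set p) | p. is_path X q p \<and> hd p = x \<and> last p = y}"

definition PhiSet :: "'a set \<Rightarrow> ('a \<Rightarrow> int) \<Rightarrow> ('a \<Rightarrow> 'a \<Rightarrow> real) \<Rightarrow> 'a set \<Rightarrow> 'a set \<Rightarrow> int" where
  "PhiSet X H q B D = Min {Phi X H q x y | x y. x \<in> B \<and> y \<in> D}"

definition bdry :: "'a set \<Rightarrow> ('a \<Rightarrow> 'a \<Rightarrow> real) \<Rightarrow> 'a set \<Rightarrow> 'a set" where
  "bdry X q B = {y \<in> X. y \<notin> B \<and> (\<exists>x\<in>B. q x y > 0)}"

definition is_cycle :: "'a set \<Rightarrow> ('a \<Rightarrow> int) \<Rightarrow> ('a \<Rightarrow> 'a \<Rightarrow> real) \<Rightarrow> 'a set \<Rightarrow> bool" where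
  "is_cycle X H q C \<longleftrightarrow> C \<noteq> {} \<and> C \<subseteq> X \<and>
     ((\<exists>x. C = {x}) \<or>
      ((\<forall>x\<in>C. \<forall>y\<in>C. \<exists>p. is_path X q p \<and> set p \<subseteq> C \<and> hd p = x \<and> last p = y) \<and>
       (\<forall>w\<in>C. \<forall>z\<in>bdry X q C. H w < H z)))"

definition depth :: "'a set \<Rightarrow> ('a \<Rightarrow> int) \<Rightarrow> ('a \<Rightarrow> 'a \<Rightarrow> real) \<Rightarrow> 'a set \<Rightarrow> int" where
  "depth X H q C = PhiSet X H q C (X - C) - Min (H ` C)"

definition cycA :: "'a set \<Rightarrow> ('a \<Rightarrow> int) \<Rightarrow> ('a \<Rightarrow> 'a \<Rightarrow> real) \<Rightarrow> 'a \<Rightarrow> 'a set \<Rightarrow> 'a set" where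
  "cycA X H q x A = {x} \<union> {z \<in> X. Phi X H q x z < PhiSet X H q {x} A}"

definition GammaA :: "'a set \<Rightarrow> ('a \<Rightarrow> int) \<Rightarrow> ('a \<Rightarrow> 'a \<Rightarrow> real) \<Rightarrow> 'a \<Rightarrow> 'a set \<Rightarrow> int" where
  "GammaA X H q x A = depth X H q (cycA X H q x A)"

definition maximal_cycle_in :: "'a set \<Rightarrow> ('a \<Rightarrow> int) \<Rightarrow> ('a \<Rightarrow> 'a \<Rightarrow> real) \<Rightarrow> 'a set \<Rightarrow> 'a set \<Rightarrow> bool" where
  "maximal_cycle_in X H q B C \<longleftrightarrow> is_cycle X H q C \<and> C \<subseteq> B \<and>
     \<not> (\<exists>C'. is_cycle X H q C' \<and> C' \<subseteq> B \<and> C \<subset> C')"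

definition GammaTilde :: "'a set \<Rightarrow> ('a \<Rightarrow> int) \<Rightarrow> ('a \<Rightarrow> 'a \<Rightarrow> real) \<Rightarrow> 'a set \<Rightarrow> int" where
  "GammaTilde X H q B = Max {depth X H q C | C. maximal_cycle_in X H q B C}"

text \<open>Sites (v1,v2) with v1 < L, v2 < K. Configurations sigma in {0,1}^Lambda are encoded
  by their set of occupied sites (a subset of Lambda).\<close>
definition sites :: "nat \<Rightarrow> nat \<Rightarrow> (nat \<times> nat) set" where
  "sites K L = {(v1, v2). v1 < L \<and> v2 < K}"

definition cyl_adj :: "nat \<Rightarrow> nat \<times> nat \<Rightarrow> nat \<times> nat \<Rightarrow> bool" where
  "cyl_adj K v w \<longleftrightarrow>
     \<bar>int (fst v) - int (fst w)\<bar> + \<bar>int (snd v) - int (snd w)\<bar> = 1 \<or>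
     (fst v = fst w \<and> {snd v, snd w} = {0, K - 1})"

definition hc_X :: "nat \<Rightarrow> nat \<Rightarrow> (nat \<times> nat) set set" where
  "hc_X K L = {\<sigma>. \<sigma> \<subseteq> sites K L \<and>
      (\<forall>v\<in>\<sigma>. \<forall>w\<in>\<sigma>. \<not> cyl_adj K v w)}"

definition hc_H :: "(nat \<times> nat) set \<Rightarrow> int" where
  "hc_H \<sigma> = - int (card \<sigma>)"

definition ndiff :: "(nat \<times> nat) set \<Rightarrow> (nat \<times> nat) set \<Rightarrow> nat" where
  "ndiff \<sigma> \<sigma>' = card ((\<sigma> - \<sigma>') \<union> (\<sigma>' - \<sigma>))"

definition hc_q :: "nat \<Rightarrow> nat \<Rightarrow> (nat \<times> nat) set \<Rightarrow> (nat \<times> nat) set \<Rightarrow> real" where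
  "hc_q K L \<sigma> \<sigma>' =
     (if ndiff \<sigma> \<sigma>' = 1 then 1 / real (K * L)
      else if \<sigma> = \<sigma>' then 1 - (\<Sum>\<eta>\<in>{\<eta> \<in> hc_X K L. ndiff \<sigma> \<eta> = 1}. 1 / real (K * L))
      else 0)"

definition even_conf :: "nat \<Rightarrow> nat \<Rightarrow> (nat \<times> nat) set" where
  "even_conf K L = {v \<in> sites K L. even (fst v + snd v)}"

definition odd_conf :: "nat \<Rightarrow> nat \<Rightarrow> (nat \<times> nat) set" where
  "odd_conf K L = {v \<in> sites K L. odd (fst v + snd v)}"

end

theory Submission
  imports Defs
begin

definition reach :: "'a set \<Rightarrow> ('a \<Rightarrow> int) \<Rightarrow> ('a \<Rightarrow> 'a \<Rightarrow> real) \<Rightarrow> int \<Rightarrow> 'a \<Rightarrow> 'a \<Rightarrow> bool" where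
  "reach X H q h a b \<longleftrightarrow> (\<exists>p. is_path X q p \<and> hd p = a \<and> last p = b \<and> (\<forall>s\<in>set p. H s \<le> h))"

lemma reach_refl: "a \<in> X \<Longrightarrow> H a \<le> h \<Longrightarrow> reach X H q h a a"
  unfolding reach_def is_path_def by (rule exI[of _ "[a]"]) auto

lemma is_path_snoc:
  assumes "is_path X q p" "c \<in> X" "q (last p) c > 0"
  shows "is_path X q (p @ [c])"
  unfolding is_path_def
proof (intro conjI allI impI)
  show "p @ [c] \<noteq> []" by simp
  show "set (p @ [c]) \<subseteq> X" using assms unfolding is_path_def by auto
  fix i assume i: "Suc i < length (p @ [c])"
  show "0 < q ((p @ [c]) ! i) ((p @ [c]) ! Suc i)"
  proof (cases "Suc i < length p")
    case True thus ?thesis using assms(1) unfolding is_path_def by (auto simp: nth_append)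
  next
    case False
    hence "i = length p - 1" "p \<noteq> []" using i assms(1) unfolding is_path_def by auto
    thus ?thesis using assms(3) False i by (auto simp: nth_append last_conv_nth)
  qed
qed

lemma is_path_butlast:
  assumes "is_path X q (xs @ [x])" "xs \<noteq> []"
  shows "is_path X q xs \<and> q (last xs) x > 0 \<and> x \<in> X"
proof -
  have A: "set (xs @ [x]) \<subseteq> X" and B: "\<forall>i. Suc i < length (xs@[x]) \<longrightarrow> q ((xs@[x]) ! i) ((xs@[x]) ! Suc i) > 0"
    using assms(1) unfolding is_path_def by auto
  have "is_path X q xs" unfolding is_path_def
  proof (intro conjI allI impI)
    show "xs \<noteq> []" by fact
    show "set xs \<subseteq> X" using A by auto
    fix i assume "Suc i < length xs"
    thus "q (xs ! i) (xs ! Suc i) > 0" using B[rule_format, of i] by (auto simp: nth_append)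
  qed
  moreover have "q (last xs) x > 0"
    using B[rule_format, of "length xs - 1"] assms(2) by (auto simp: nth_append last_conv_nth)
  ultimately show ?thesis using A by auto
qed

lemma is_path_tl:
  assumes "is_path X q (x # xs)" "xs \<noteq> []"
  shows "is_path X q xs \<and> q x (hd xs) > 0 \<and> x \<in> X"
proof -
  have A: "set (x#xs) \<subseteq> X" and B: "\<forall>i. Suc i < length (x#xs) \<longrightarrow> q ((x#xs) ! i) ((x#xs) ! Suc i) > 0"
    using assms(1) unfolding is_path_def by auto
  have "is_path X q xs" unfolding is_path_def
  proof (intro conjI allI impI)
    show "xs \<noteq> []" by fact
    show "set xs \<subseteq> X" using A by auto
    fix i assume "Suc i < length xs"
    thus "q (xs ! i) (xs ! Suc i) > 0" using B[rule_format, of "Suc i"] by auto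
  qed
  moreover have "q x (hd xs) > 0"
    using B[rule_format, of 0] assms(2) by (auto simp: hd_conv_nth)
  ultimately show ?thesis using A by auto
qed

lemma reach_step: "reach X H q h a b \<Longrightarrow> c \<in> X \<Longrightarrow> q b c > 0 \<Longrightarrow> H c \<le> h \<Longrightarrow> reach X H q h a c"
  unfolding reach_def
  apply (elim exE conjE)
  subgoal for p
    apply (rule exI[of _ "p @ [c]"])
    using is_path_snoc[of X q p c] by (auto simp: is_path_def)
  done

lemma reach_path_aux:
  "is_path X q p \<Longrightarrow> (\<forall>s\<in>set p. H s \<le> h) \<Longrightarrow> reach X H q h a (hd p) \<Longrightarrow> reach X H q h a (last p)"
proof (induction p rule: rev_induct)
  case Nil thus ?case by (simp add: is_path_def)
next
  case (snoc x xs)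
  show ?case
  proof (cases "xs = []")
    case True thus ?thesis using snoc by simp
  next
    case False
    have *: "is_path X q xs \<and> q (last xs) x > 0 \<and> x \<in> X" using is_path_butlast[OF snoc(2) False] .
    have "reach X H q h a (last xs)" using snoc * False by auto
    thus ?thesis using reach_step[of X H q h a "last xs" x] * snoc(3) by auto
  qed
qed

lemma reach_trans: "reach X H q h a b \<Longrightarrow> reach X H q h b c \<Longrightarrow> reach X H q h a c"
  using reach_path_aux unfolding reach_def[of X H q h b c] by metis

lemma reach_mono: "reach X H q h a b \<Longrightarrow> h \<le> h' \<Longrightarrow> reach X H q h' a b"
  unfolding reach_def by force

lemma reach_in: "reach X H q h a b \<Longrightarrow> a \<in> X \<and> b \<in> X \<and> H a \<le> h \<and> H b \<le> h"
  unfolding reach_def is_path_def by (auto intro: hd_in_set last_in_set)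

lemma reach_rev_aux:
  assumes sym: "\<And>a b. a \<in> X \<Longrightarrow> b \<in> X \<Longrightarrow> q a b > 0 \<Longrightarrow> q b a > 0"
  shows "is_path X q p \<Longrightarrow> (\<forall>s\<in>set p. H s \<le> h) \<Longrightarrow> reach X H q h (last p) (hd p)"
proof (induction p)
  case Nil thus ?case by (simp add: is_path_def)
next
  case (Cons x xs)
  show ?case
  proof (cases "xs = []")
    case True thus ?thesis using Cons by (auto intro!: reach_refl simp: is_path_def)
  next
    case False
    have *: "is_path X q xs \<and> q x (hd xs) > 0 \<and> x \<in> X" using is_path_tl[OF Cons(2) False] .
    have r: "reach X H q h (last xs) (hd xs)" using Cons * by auto
    have "hd xs \<in> X" using * False unfolding is_path_def by auto
    hence "q (hd xs) x > 0" using sym * by auto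
    thus ?thesis using reach_step[OF r] * Cons(3) False by auto
  qed
qed

lemma reach_rev:
  assumes sym: "\<And>a b. a \<in> X \<Longrightarrow> b \<in> X \<Longrightarrow> q a b > 0 \<Longrightarrow> q b a > 0"
  shows "reach X H q h a b \<Longrightarrow> reach X H q h b a"
proof -
  assume "reach X H q h a b"
  then obtain p where "is_path X q p" "hd p = a" "last p = b" "\<forall>s\<in>set p. H s \<le> h"
    unfolding reach_def by blast
  thus ?thesis using reach_rev_aux[of X q p H h, OF sym] by auto
qed

lemma is_path_sub: "is_path S q p \<Longrightarrow> S \<subseteq> X \<Longrightarrow> is_path X q p"
  unfolding is_path_def by auto
lemma is_path_restr: "is_path X q p \<Longrightarrow> set p \<subseteq> S \<Longrightarrow> is_path S q p"
  unfolding is_path_def by auto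

lemma reach_all_aux:
  "is_path X q p \<Longrightarrow> (\<forall>s\<in>set p. H s \<le> h) \<Longrightarrow> w \<in> set p \<Longrightarrow> reach X H q h (hd p) w"
proof (induction p arbitrary: w rule: rev_induct)
  case Nil thus ?case by (simp add: is_path_def)
next
  case (snoc x xs)
  show ?case
  proof (cases "xs = []")
    case True thus ?thesis using snoc by (auto intro!: reach_refl simp: is_path_def)
  next
    case False
    have *: "is_path X q xs \<and> q (last xs) x > 0 \<and> x \<in> X" using is_path_butlast[OF snoc(2) False] .
    have r0: "reach X H q h (hd xs) (hd xs)" using * snoc(3) False
      by (intro reach_refl) (auto simp: is_path_def)
    show ?thesis
    proof (cases "w \<in> set xs")
      case True thus ?thesis using snoc * False by auto
    next
      case False2: False
      hence "w = x" using snoc by auto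
      thus ?thesis using reach_path_aux[of X q "xs@[x]" H h "hd xs"] r0 snoc(2,3) False by auto
    qed
  qed
qed

lemma exit_lemma:
  "is_path X q p \<Longrightarrow> hd p \<in> S \<Longrightarrow> last p \<notin> S \<Longrightarrow>
     \<exists>i. Suc i < length p \<and> p!i \<in> S \<and> p!Suc i \<notin> S \<and> p!i \<in> X \<and> p!Suc i \<in> X \<and> q (p!i) (p!Suc i) > 0"
proof (induction p)
  case Nil thus ?case by (simp add: is_path_def)
next
  case (Cons x xs)
  show ?case
  proof (cases "xs = []")
    case True thus ?thesis using Cons by simp
  next
    case False
    have *: "is_path X q xs \<and> q x (hd xs) > 0 \<and> x \<in> X" using is_path_tl[OF Cons(2) False] .
    have hx: "hd xs \<in> X" using * False unfolding is_path_def by auto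
    show ?thesis
    proof (cases "hd xs \<in> S")
      case True
      then obtain i where "Suc i < length xs \<and> xs!i \<in> S \<and> xs!Suc i \<notin> S \<and> xs!i \<in> X \<and> xs!Suc i \<in> X \<and> q (xs!i) (xs!Suc i) > 0"
        using Cons * False by auto
      thus ?thesis by (intro exI[of _ "Suc i"]) auto
    next
      case False2: False
      thus ?thesis using Cons * hx False by (intro exI[of _ 0]) (auto simp: hd_conv_nth)
    qed
  qed
qed

locale LS =
  fixes X :: "'a set" and H :: "'a \<Rightarrow> int" and q :: "'a \<Rightarrow> 'a \<Rightarrow> real"
  assumes finX: "finite X"
  and qsym: "\<And>a b. a \<in> X \<Longrightarrow> b \<in> X \<Longrightarrow> q a b > 0 \<Longrightarrow> q b a > 0"
  and conn: "\<And>a b. a \<in> X \<Longrightarrow> b \<in> X \<Longrightarrow> \<exists>h. reach X H q h a b"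
begin

definition "PS a b = {Max (H ` set p) | p. is_path X q p \<and> hd p = a \<and> last p = b}"

lemma PS_fin: "finite (PS a b)"
proof -
  have "PS a b \<subseteq> H ` X"
  proof
    fix v assume "v \<in> PS a b"
    then obtain p where p: "is_path X q p" "v = Max (H ` set p)" unfolding PS_def by auto
    have "v \<in> H ` set p" using p by (auto simp: is_path_def intro!: Max_in)
    thus "v \<in> H ` X" using p(1) unfolding is_path_def by auto
  qed
  thus ?thesis using finite_subset finX finite_imageI by metis
qed

lemma Phi_eq: "Phi X H q a b = Min (PS a b)" unfolding Phi_def PS_def ..

lemma Phi_le: "reach X H q h a b \<Longrightarrow> Phi X H q a b \<le> h"
proof -
  assume "reach X H q h a b"
  then obtain p where p: "is_path X q p" "hd p = a" "last p = b" "\<forall>s\<in>set p. H s \<le> h"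
    unfolding reach_def by blast
  have "Max (H ` set p) \<in> PS a b" using p unfolding PS_def by auto
  hence "Phi X H q a b \<le> Max (H ` set p)" unfolding Phi_eq using PS_fin by auto
  also have "\<dots> \<le> h" using p by (auto simp: is_path_def)
  finally show ?thesis .
qed

lemma Phi_att: "a \<in> X \<Longrightarrow> b \<in> X \<Longrightarrow> reach X H q (Phi X H q a b) a b"
proof -
  assume ab: "a \<in> X" "b \<in> X"
  obtain h where "reach X H q h a b" using conn[OF ab] by blast
  then obtain p where "is_path X q p" "hd p = a" "last p = b" unfolding reach_def by blast
  hence "PS a b \<noteq> {}" unfolding PS_def by auto
  hence "Min (PS a b) \<in> PS a b" using PS_fin by auto
  then obtain p where p: "is_path X q p" "hd p = a" "last p = b" "Phi X H q a b = Max (H ` set p)"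
    unfolding PS_def Phi_eq by auto
  have "\<forall>s\<in>set p. H s \<le> Phi X H q a b" using p by (auto simp: is_path_def)
  thus ?thesis using p unfolding reach_def by blast
qed

lemma Phi_geH: "a \<in> X \<Longrightarrow> b \<in> X \<Longrightarrow> H a \<le> Phi X H q a b \<and> H b \<le> Phi X H q a b"
proof -
  assume "a \<in> X" "b \<in> X"
  from reach_in[OF Phi_att[OF this]] show ?thesis by simp
qed

lemma Phi_tri: "a \<in> X \<Longrightarrow> b \<in> X \<Longrightarrow> c \<in> X \<Longrightarrow>
   Phi X H q a c \<le> max (Phi X H q a b) (Phi X H q b c)"
proof -
  assume abc: "a \<in> X" "b \<in> X" "c \<in> X"
  let ?m = "max (Phi X H q a b) (Phi X H q b c)"
  have "reach X H q ?m a b" using reach_mono[OF Phi_att[OF abc(1,2)]] by simp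
  moreover have "reach X H q ?m b c" using reach_mono[OF Phi_att[OF abc(2,3)]] by simp
  ultimately show ?thesis using reach_trans Phi_le by metis
qed

lemma Phi_self: "a \<in> X \<Longrightarrow> Phi X H q a a = H a"
  using Phi_le[OF reach_refl[of a X H "H a" q]] Phi_geH[of a a] by auto

lemma Phi_nbr: "a \<in> X \<Longrightarrow> b \<in> X \<Longrightarrow> q a b > 0 \<Longrightarrow> Phi X H q a b \<le> max (H a) (H b)"
  by (intro Phi_le reach_step[OF reach_refl]) auto

lemma Phi_lower: "a \<in> X \<Longrightarrow> b \<in> X \<Longrightarrow>
  (\<And>p. is_path X q p \<Longrightarrow> hd p = a \<Longrightarrow> last p = b \<Longrightarrow> \<exists>s\<in>set p. h \<le> H s) \<Longrightarrow> h \<le> Phi X H q a b"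
proof -
  assume ab: "a \<in> X" "b \<in> X" and hyp: "\<And>p. is_path X q p \<Longrightarrow> hd p = a \<Longrightarrow> last p = b \<Longrightarrow> \<exists>s\<in>set p. h \<le> H s"
  obtain p where p: "is_path X q p" "hd p = a" "last p = b" "\<forall>s\<in>set p. H s \<le> Phi X H q a b"
    using Phi_att[OF ab] unfolding reach_def by blast
  thus ?thesis using hyp[OF p(1-3)] by force
qed

lemma PhiSet_set: "B \<subseteq> X \<Longrightarrow> D \<subseteq> X \<Longrightarrow>
   {Phi X H q x y | x y. x \<in> B \<and> y \<in> D} = (\<lambda>(x,y). Phi X H q x y) ` (B \<times> D)"
  by auto

lemma PhiSet_fin: "B \<subseteq> X \<Longrightarrow> D \<subseteq> X \<Longrightarrow> finite {Phi X H q x y | x y. x \<in> B \<and> y \<in> D}"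
proof -
  assume "B \<subseteq> X" "D \<subseteq> X"
  hence "finite (B \<times> D)" using finX by (meson finite_SigmaI finite_subset)
  thus ?thesis using PhiSet_set[OF \<open>B \<subseteq> X\<close> \<open>D \<subseteq> X\<close>] by simp
qed

lemma PhiSet_le: "B \<subseteq> X \<Longrightarrow> D \<subseteq> X \<Longrightarrow> x \<in> B \<Longrightarrow> y \<in> D \<Longrightarrow> PhiSet X H q B D \<le> Phi X H q x y"
  unfolding PhiSet_def by (rule Min_le[OF PhiSet_fin]) auto

lemma PhiSet_ge: "B \<subseteq> X \<Longrightarrow> D \<subseteq> X \<Longrightarrow> x \<in> B \<Longrightarrow> y \<in> D \<Longrightarrow>
   (\<And>x y. x \<in> B \<Longrightarrow> y \<in> D \<Longrightarrow> h \<le> Phi X H q x y) \<Longrightarrow> h \<le> PhiSet X H q B D"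
proof -
  assume a: "B \<subseteq> X" "D \<subseteq> X" "x \<in> B" "y \<in> D" "\<And>x y. x \<in> B \<Longrightarrow> y \<in> D \<Longrightarrow> h \<le> Phi X H q x y"
  let ?S = "{Phi X H q x y | x y. x \<in> B \<and> y \<in> D}"
  have ne: "?S \<noteq> {}" using a by auto
  have "\<forall>v\<in>?S. h \<le> v" using a(5) by auto
  thus ?thesis unfolding PhiSet_def using Min_ge_iff[OF PhiSet_fin[OF a(1,2)] ne] by blast
qed

lemma PhiSet_single: "PhiSet X H q {a} {b} = Phi X H q a b"
  unfolding PhiSet_def by simp

lemma depth_le:
  assumes "C \<subseteq> X" "C \<noteq> {}" "\<And>x. x \<in> C \<Longrightarrow> \<exists>y \<in> X - C. Phi X H q x y \<le> H x + b"
  shows "depth X H q C \<le> b"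
proof -
  have fC: "finite C" using finite_subset[OF assms(1) finX] .
  have "Min (H ` C) \<in> H ` C" using fC assms(2) by (intro Min_in) auto
  then obtain x where x: "x \<in> C" "H x = Min (H ` C)" by (metis imageE)
  obtain y where y: "y \<in> X - C" "Phi X H q x y \<le> H x + b" using assms(3)[OF x(1)] by blast
  have "PhiSet X H q C (X - C) \<le> Phi X H q x y" using assms(1) x y by (intro PhiSet_le) auto
  thus ?thesis unfolding depth_def using x y by linarith
qed

lemma cyc_sub: "is_cycle X H q C \<Longrightarrow> C \<subseteq> X"
  unfolding is_cycle_def by simp

lemma cyc_single: "x \<in> X \<Longrightarrow> is_cycle X H q {x}"
  unfolding is_cycle_def by (intro conjI disjI1) auto

lemma cycles_fin: "finite {C. is_cycle X H q C}"
proof -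
  have "{C. is_cycle X H q C} \<subseteq> Pow X" using cyc_sub by blast
  thus ?thesis using finX by (simp add: finite_subset)
qed

lemma maxcyc_exists: "B \<subseteq> X \<Longrightarrow> x \<in> B \<Longrightarrow> \<exists>C. maximal_cycle_in X H q B C"
proof -
  assume B: "B \<subseteq> X" "x \<in> B"
  define S where "S = {C. is_cycle X H q C \<and> C \<subseteq> B}"
  have fS: "finite S" using cycles_fin unfolding S_def by (rule finite_subset[rotated]) blast
  have "is_cycle X H q {x}" using B cyc_single by blast
  hence "{x} \<in> S" using B unfolding S_def by simp
  hence ne: "S \<noteq> {}" by blast
  have "Max (card ` S) \<in> card ` S" using fS ne by (intro Max_in) auto
  then obtain C where C: "C \<in> S" "card C = Max (card ` S)" by (metis imageE)
  have nC: "\<not> (\<exists>C'. is_cycle X H q C' \<and> C' \<subseteq> B \<and> C \<subset> C')"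
  proof
    assume "\<exists>C'. is_cycle X H q C' \<and> C' \<subseteq> B \<and> C \<subset> C'"
    then obtain C' where C': "is_cycle X H q C'" "C' \<subseteq> B" "C \<subset> C'" by blast
    have CS: "C' \<in> S" using C' unfolding S_def by simp
    have "C' \<subseteq> X" using C' B by blast
    hence "finite C'" using finite_subset finX by blast
    hence "card C < card C'" using C'(3) psubset_card_mono by blast
    moreover have "card C' \<le> Max (card ` S)" using CS fS by simp
    ultimately show False using C by simp
  qed
  have "maximal_cycle_in X H q B C" unfolding maximal_cycle_in_def using C nC unfolding S_def by simp
  thus ?thesis by blast
qed

lemma GT_fin: "finite {depth X H q C | C. maximal_cycle_in X H q B C}"
proof -
  have "{C. maximal_cycle_in X H q B C} \<subseteq> {C. is_cycle X H q C}" unfolding maximal_cycle_in_def by blast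
  hence "finite {C. maximal_cycle_in X H q B C}" using cycles_fin by (simp add: finite_subset)
  moreover have "{depth X H q C | C. maximal_cycle_in X H q B C} = depth X H q ` {C. maximal_cycle_in X H q B C}" by blast
  ultimately show ?thesis by simp
qed

lemma GT_le: "B \<subseteq> X \<Longrightarrow> x \<in> B \<Longrightarrow> (\<And>C. maximal_cycle_in X H q B C \<Longrightarrow> depth X H q C \<le> b) \<Longrightarrow>
   GammaTilde X H q B \<le> b"
proof -
  assume a: "B \<subseteq> X" "x \<in> B" "\<And>C. maximal_cycle_in X H q B C \<Longrightarrow> depth X H q C \<le> b"
  let ?S = "{depth X H q C | C. maximal_cycle_in X H q B C}"
  obtain C where "maximal_cycle_in X H q B C" using maxcyc_exists a by blast
  hence ne: "?S \<noteq> {}" by blast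
  have "\<forall>v\<in>?S. v \<le> b" using a(3) by blast
  thus ?thesis unfolding GammaTilde_def using Max_le_iff[OF GT_fin ne] by blast
qed

lemma GT_eq: "B \<subseteq> X \<Longrightarrow> maximal_cycle_in X H q B C0 \<Longrightarrow> depth X H q C0 = b \<Longrightarrow>
   (\<And>C. maximal_cycle_in X H q B C \<Longrightarrow> depth X H q C \<le> b) \<Longrightarrow> GammaTilde X H q B = b"
proof -
  assume a: "B \<subseteq> X" "maximal_cycle_in X H q B C0" "depth X H q C0 = b"
    "\<And>C. maximal_cycle_in X H q B C \<Longrightarrow> depth X H q C \<le> b"
  let ?S = "{depth X H q C | C. maximal_cycle_in X H q B C}"
  have bS: "b \<in> ?S" using a by blast
  hence "b \<le> Max ?S" using GT_fin by simp
  moreover have ne: "?S \<noteq> {}" using bS by blast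
  have "\<forall>v\<in>?S. v \<le> b" using a(4) by blast
  hence "Max ?S \<le> b" using Max_le_iff[OF GT_fin ne] by blast
  ultimately show ?thesis unfolding GammaTilde_def by simp
qed

end

locale LS2 = LS +
  fixes ee oo
  assumes eX: "ee \<in> X" and oX: "oo \<in> X" and emin: "\<And>z. z \<in> X \<Longrightarrow> H ee \<le> H z"
  and elow: "H ee < Phi X H q ee oo"
begin

definition "C1 = cycA X H q ee {oo}"

lemma C1_eq: "C1 = {z \<in> X. Phi X H q ee z < Phi X H q ee oo}"
  unfolding C1_def cycA_def PhiSet_single using Phi_self[OF eX] elow eX by auto

lemma C1_sub: "C1 \<subseteq> X" by (auto simp: C1_eq)
lemma e_C1: "ee \<in> C1" using eX Phi_self[OF eX] elow by (auto simp: C1_eq)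
lemma o_C1: "oo \<notin> C1" by (auto simp: C1_eq)
lemma C1_fin: "finite C1" using finite_subset[OF C1_sub finX] .

lemma C1_H: "x \<in> C1 \<Longrightarrow> H x < Phi X H q ee oo"
  using Phi_geH[OF eX, of x] by (auto simp: C1_eq)

lemma C1_path: "z \<in> C1 \<Longrightarrow> reach C1 H q (Phi X H q ee z) ee z"
proof -
  assume z: "z \<in> C1"
  hence zX: "z \<in> X" and zl: "Phi X H q ee z < Phi X H q ee oo" by (auto simp: C1_eq)
  obtain p where p: "is_path X q p" "hd p = ee" "last p = z" "\<forall>s\<in>set p. H s \<le> Phi X H q ee z"
    using Phi_att[OF eX zX] unfolding reach_def by blast
  have "set p \<subseteq> C1"
  proof
    fix w assume w: "w \<in> set p"
    have "reach X H q (Phi X H q ee z) ee w" using reach_all_aux[OF p(1) p(4) w] p(2) by simp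
    hence "Phi X H q ee w \<le> Phi X H q ee z" by (rule Phi_le)
    moreover have "w \<in> X" using w p(1) unfolding is_path_def by auto
    ultimately show "w \<in> C1" using zl by (auto simp: C1_eq)
  qed
  hence "is_path C1 q p" using is_path_restr[OF p(1)] by blast
  thus ?thesis unfolding reach_def using p by blast
qed

lemma C1_conn: "x \<in> C1 \<Longrightarrow> y \<in> C1 \<Longrightarrow> \<exists>p. is_path X q p \<and> set p \<subseteq> C1 \<and> hd p = x \<and> last p = y"
proof -
  assume xy: "x \<in> C1" "y \<in> C1"
  let ?h = "max (Phi X H q ee x) (Phi X H q ee y)"
  have sym: "\<And>a b. a \<in> C1 \<Longrightarrow> b \<in> C1 \<Longrightarrow> q a b > 0 \<Longrightarrow> q b a > 0"
    using qsym C1_sub by blast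
  have r1: "reach C1 H q ?h ee x" using reach_mono[OF C1_path[OF xy(1)]] by simp
  have r2: "reach C1 H q ?h ee y" using reach_mono[OF C1_path[OF xy(2)]] by simp
  have "reach C1 H q ?h x y" using reach_trans[OF reach_rev[OF sym r1] r2] .
  then obtain p where p: "is_path C1 q p" "hd p = x" "last p = y" unfolding reach_def by blast
  have "is_path X q p" using is_path_sub[OF p(1) C1_sub] .
  moreover have "set p \<subseteq> C1" using p(1) unfolding is_path_def by simp
  ultimately show ?thesis using p by blast
qed

lemma C1_bd: "z \<in> bdry X q C1 \<Longrightarrow> Phi X H q ee oo \<le> H z"
proof (rule ccontr)
  assume z: "z \<in> bdry X q C1" and nz: "\<not> Phi X H q ee oo \<le> H z"
  from z obtain x where x: "x \<in> C1" "q x z > 0" and zX: "z \<in> X" and zn: "z \<notin> C1"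
    unfolding bdry_def by blast
  have xX: "x \<in> X" using x C1_sub by blast
  have "Phi X H q ee z \<le> max (Phi X H q ee x) (Phi X H q x z)" using Phi_tri[OF eX xX zX] .
  moreover have "Phi X H q x z \<le> max (H x) (H z)" using Phi_nbr[OF xX zX x(2)] .
  moreover have "Phi X H q ee x < Phi X H q ee oo" using x(1) by (auto simp: C1_eq)
  moreover have "H x < Phi X H q ee oo" using C1_H[OF x(1)] .
  ultimately have "Phi X H q ee z < Phi X H q ee oo" using nz by linarith
  hence "z \<in> C1" using zX by (auto simp: C1_eq)
  thus False using zn by blast
qed

lemma C1_cycle: "is_cycle X H q C1"
  unfolding is_cycle_def
proof (intro conjI disjI2)
  show "C1 \<noteq> {}" using e_C1 by blast
  show "C1 \<subseteq> X" by (rule C1_sub)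
  show "\<forall>x\<in>C1. \<forall>y\<in>C1. \<exists>p. is_path X q p \<and> set p \<subseteq> C1 \<and> hd p = x \<and> last p = y"
    using C1_conn by blast
  show "\<forall>w\<in>C1. \<forall>z\<in>bdry X q C1. H w < H z"
    using C1_H C1_bd by fastforce
qed

lemma C1_max: "maximal_cycle_in X H q (X - {oo}) C1"
  unfolding maximal_cycle_in_def
proof (intro conjI notI)
  show "is_cycle X H q C1" by (rule C1_cycle)
  show "C1 \<subseteq> X - {oo}" using C1_sub o_C1 by blast
  assume "\<exists>C'. is_cycle X H q C' \<and> C' \<subseteq> X - {oo} \<and> C1 \<subset> C'"
  then obtain C' where C': "is_cycle X H q C'" "C' \<subseteq> X - {oo}" "C1 \<subset> C'" by blast
  have ns: "\<not> (\<exists>x. C' = {x})"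
  proof
    assume "\<exists>x. C' = {x}"
    then obtain x where "C' = {x}" by blast
    thus False using C'(3) e_C1 by blast
  qed
  hence cc: "(\<forall>x\<in>C'. \<forall>y\<in>C'. \<exists>p. is_path X q p \<and> set p \<subseteq> C' \<and> hd p = x \<and> last p = y) \<and>
       (\<forall>w\<in>C'. \<forall>z\<in>bdry X q C'. H w < H z)" using C'(1) unfolding is_cycle_def by blast
  obtain y where y: "y \<in> C'" "y \<notin> C1" using C'(3) by blast
  have eC: "ee \<in> C'" using C'(3) e_C1 by blast
  obtain p where p: "is_path X q p" "set p \<subseteq> C'" "hd p = ee" "last p = y" using cc eC y(1) by blast
  obtain i where i: "Suc i < length p" "p!i \<in> C1" "p!Suc i \<notin> C1" "p!i \<in> X" "p!Suc i \<in> X"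
     "q (p!i) (p!Suc i) > 0"
    using exit_lemma[of X q p C1] p e_C1 y by auto
  have "p!Suc i \<in> bdry X q C1" unfolding bdry_def using i by blast
  hence hz: "Phi X H q ee oo \<le> H (p!Suc i)" by (rule C1_bd)
  have zC: "p!Suc i \<in> C'" using i(1) p(2) nth_mem by blast
  obtain p0 where p0: "is_path X q p0" "hd p0 = ee" "last p0 = oo" "\<forall>s\<in>set p0. H s \<le> Phi X H q ee oo"
    using Phi_att[OF eX oX] unfolding reach_def by blast
  have oC: "oo \<notin> C'" using C'(2) by blast
  obtain j where j: "Suc j < length p0" "p0!j \<in> C'" "p0!Suc j \<notin> C'" "p0!j \<in> X" "p0!Suc j \<in> X"
     "q (p0!j) (p0!Suc j) > 0"
    using exit_lemma[of X q p0 C'] p0 eC oC by auto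
  have "p0!Suc j \<in> bdry X q C'" unfolding bdry_def using j by blast
  hence "H (p!Suc i) < H (p0!Suc j)" using cc zC by blast
  moreover have "H (p0!Suc j) \<le> Phi X H q ee oo" using p0(4) j(1) nth_mem by blast
  ultimately show False using hz by linarith
qed

lemma C1_depth: "depth X H q C1 = Phi X H q ee oo - H ee"
proof -
  have m: "Min (H ` C1) = H ee"
    using C1_fin e_C1 C1_sub emin by (intro Min_eqI) auto
  have "PhiSet X H q C1 (X - C1) \<le> Phi X H q ee oo"
    using C1_sub e_C1 oX o_C1 by (intro PhiSet_le) auto
  moreover have "Phi X H q ee oo \<le> PhiSet X H q C1 (X - C1)"
  proof (rule PhiSet_ge)
    show "C1 \<subseteq> X" "X - C1 \<subseteq> X" "ee \<in> C1" "oo \<in> X - C1" using C1_sub e_C1 oX o_C1 by auto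
    fix x z assume xz: "x \<in> C1" "z \<in> X - C1"
    show "Phi X H q ee oo \<le> Phi X H q x z"
    proof (rule ccontr)
      assume "\<not> ?thesis"
      moreover have "Phi X H q ee z \<le> max (Phi X H q ee x) (Phi X H q x z)"
        using Phi_tri[OF eX, of x z] xz C1_sub by blast
      moreover have "Phi X H q ee x < Phi X H q ee oo" using xz(1) by (auto simp: C1_eq)
      ultimately have "z \<in> C1" using xz(2) by (auto simp: C1_eq)
      thus False using xz by blast
    qed
  qed
  ultimately show ?thesis unfolding depth_def m by linarith
qed

lemma depth_e: "C \<subseteq> X - {oo} \<Longrightarrow> ee \<in> C \<Longrightarrow> depth X H q C \<le> Phi X H q ee oo - H ee"
proof -
  assume C: "C \<subseteq> X - {oo}" "ee \<in> C"
  have CX: "C \<subseteq> X" using C by blast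
  have m: "Min (H ` C) = H ee"
    using finite_subset[OF CX finX] C emin by (intro Min_eqI) auto
  have "PhiSet X H q C (X - C) \<le> Phi X H q ee oo"
    using C oX by (intro PhiSet_le) auto
  thus ?thesis unfolding depth_def m by linarith
qed

lemma mc_sub: "maximal_cycle_in X H q B C \<Longrightarrow> C \<subseteq> B \<and> C \<noteq> {}"
  unfolding maximal_cycle_in_def is_cycle_def by blast

lemma final_parts:
  assumes desc: "\<And>x. x \<in> X \<Longrightarrow> x \<noteq> ee \<Longrightarrow> x \<noteq> oo \<Longrightarrow> \<exists>y\<in>{ee,oo}. Phi X H q x y \<le> H x + b"
  and hb: "Phi X H q ee oo - H ee = b + 1"
  and x0: "x0 \<in> X" "x0 \<noteq> ee" "x0 \<noteq> oo"
  shows "GammaTilde X H q (X - {ee,oo}) \<le> b \<and> GammaA X H q ee {oo} = b + 1 \<and> GammaTilde X H q (X - {oo}) = b + 1"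
proof -
  have dB: "depth X H q C \<le> b" if C: "C \<subseteq> X - {ee,oo}" "C \<noteq> {}" for C
  proof (rule depth_le)
    show "C \<subseteq> X" "C \<noteq> {}" using C by auto
    fix x assume "x \<in> C"
    hence "x \<in> X" "x \<noteq> ee" "x \<noteq> oo" using C by auto
    then obtain y where "y \<in> {ee,oo}" "Phi X H q x y \<le> H x + b" using desc by blast
    moreover have "y \<in> X - C" using \<open>y \<in> {ee,oo}\<close> C eX oX by auto
    ultimately show "\<exists>y \<in> X - C. Phi X H q x y \<le> H x + b" by blast
  qed
  have a: "GammaTilde X H q (X - {ee,oo}) \<le> b"
  proof (rule GT_le)
    show "X - {ee,oo} \<subseteq> X" by blast
    show "x0 \<in> X - {ee,oo}" using x0 by blast
    fix C assume "maximal_cycle_in X H q (X - {ee, oo}) C"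
    hence "C \<subseteq> X - {ee,oo}" "C \<noteq> {}" using mc_sub by blast+
    thus "depth X H q C \<le> b" by (rule dB)
  qed
  have b: "GammaA X H q ee {oo} = b + 1"
    unfolding GammaA_def C1_def[symmetric] C1_depth hb ..
  have c: "GammaTilde X H q (X - {oo}) = b + 1"
  proof (rule GT_eq[OF _ C1_max])
    show "X - {oo} \<subseteq> X" by blast
    show "depth X H q C1 = b + 1" using C1_depth hb by simp
    fix C assume mc: "maximal_cycle_in X H q (X - {oo}) C"
    hence C: "C \<subseteq> X - {oo}" "C \<noteq> {}" using mc_sub by blast+
    show "depth X H q C \<le> b + 1"
    proof (cases "ee \<in> C")
      case True thus ?thesis using depth_e[OF C(1)] hb by simp
    next
      case False
      hence "C \<subseteq> X - {ee,oo}" using C by blast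
      hence "depth X H q C \<le> b" using C(2) by (rule dB)
      thus ?thesis by simp
    qed
  qed
  show ?thesis using a b c by blast
qed

end

locale grid =
  fixes K L :: nat
  assumes K2: "K \<ge> 2" and L2: "L \<ge> 2" and Kev: "even K"
begin

abbreviation "n \<equiv> K div 2"

lemma K_eq: "K = 2 * n" using Kev by simp
lemma n_pos: "n \<ge> 1" using K2 by simp

definition par :: "nat \<times> nat \<Rightarrow> nat" where "par v = (fst v + snd v) mod 2"

lemma adj_sym: "cyl_adj K v w = cyl_adj K w v"
  unfolding cyl_adj_def by (auto simp: abs_minus_commute insert_commute)

lemma adj_irr: "\<not> cyl_adj K v v"
  unfolding cyl_adj_def using K2 by (auto simp: doubleton_eq_iff)

lemma adj_par: "cyl_adj K v w \<Longrightarrow> par v \<noteq> par w"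
proof -
  assume a: "cyl_adj K v w"
  obtain a1 a2 b1 b2 where v: "v = (a1,a2)" and w: "w = (b1,b2)" by (cases v, cases w) auto
  show ?thesis
  proof (cases "\<bar>int a1 - int b1\<bar> + \<bar>int a2 - int b2\<bar> = 1")
    case True
    hence "(a1 = b1 \<and> (a2 = b2 + 1 \<or> b2 = a2 + 1)) \<or> (a2 = b2 \<and> (a1 = b1 + 1 \<or> b1 = a1 + 1))"
      by linarith
    thus ?thesis unfolding par_def v w by (elim disjE conjE; simp; presburger)
  next
    case False
    hence "a1 = b1" "{a2, b2} = {0, K - 1}" using a unfolding cyl_adj_def v w by auto
    hence ab: "(a2 = 0 \<and> b2 = K - 1) \<or> (a2 = K - 1 \<and> b2 = 0)" by (auto simp: doubleton_eq_iff)
    have k: "K - 1 = Suc (2*(n-1))" using K_eq n_pos by simp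
    have "(a1 + (K - 1)) mod 2 \<noteq> a1 mod 2" unfolding k by simp presburger
    thus ?thesis unfolding par_def v w using ab \<open>a1 = b1\<close> by auto
  qed
qed

lemma sites_fin: "finite (sites K L)"
proof -
  have "sites K L \<subseteq> {0..<L} \<times> {0..<K}" unfolding sites_def by auto
  thus ?thesis using finite_subset by blast
qed

lemma X_iff: "\<sigma> \<in> hc_X K L \<longleftrightarrow> \<sigma> \<subseteq> sites K L \<and> (\<forall>v\<in>\<sigma>. \<forall>w\<in>\<sigma>. \<not> cyl_adj K v w)"
  unfolding hc_X_def by simp

lemma X_fin: "finite (hc_X K L)"
proof -
  have "hc_X K L \<subseteq> Pow (sites K L)" unfolding hc_X_def by auto
  thus ?thesis using sites_fin by (simp add: finite_subset)
qed

lemma X_sub: "\<sigma> \<in> hc_X K L \<Longrightarrow> \<tau> \<subseteq> \<sigma> \<Longrightarrow> \<tau> \<in> hc_X K L"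
  unfolding X_iff by blast

lemma fin_conf: "\<sigma> \<in> hc_X K L \<Longrightarrow> finite \<sigma>"
  unfolding X_iff using sites_fin finite_subset by blast

lemma ndiff_sym: "ndiff a b = ndiff b a"
  unfolding ndiff_def by (simp add: Un_commute)

lemma ndiff_ins: "v \<notin> \<sigma> \<Longrightarrow> ndiff \<sigma> (insert v \<sigma>) = 1"
proof -
  assume "v \<notin> \<sigma>"
  hence "(\<sigma> - insert v \<sigma>) \<union> (insert v \<sigma> - \<sigma>) = {v}" by blast
  thus ?thesis unfolding ndiff_def by simp
qed

lemma q_pos: "ndiff a b = 1 \<Longrightarrow> hc_q K L a b > 0"
proof -
  assume "ndiff a b = 1"
  moreover have "K * L > 0" using K2 L2 by simp
  ultimately show ?thesis unfolding hc_q_def by simp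
qed

lemma q_pos_D: "hc_q K L a b > 0 \<Longrightarrow> a \<noteq> b \<Longrightarrow> ndiff a b = 1"
  unfolding hc_q_def by (auto split: if_splits)

lemma ndiff_1: "ndiff a b = 1 \<Longrightarrow> (\<exists>v. v \<notin> a \<and> b = insert v a) \<or> (\<exists>v. v \<notin> b \<and> a = insert v b)"
proof -
  assume "ndiff a b = 1"
  hence "card ((a - b) \<union> (b - a)) = 1" unfolding ndiff_def .
  then obtain v where v: "(a - b) \<union> (b - a) = {v}" by (rule card_1_singletonE)
  have vin: "v \<in> (a - b) \<union> (b - a)" using v by simp
  have oth: "\<And>x. x \<in> a \<Longrightarrow> x \<notin> b \<Longrightarrow> x = v" "\<And>x. x \<in> b \<Longrightarrow> x \<notin> a \<Longrightarrow> x = v"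
    using v by auto
  show ?thesis
  proof (cases "v \<in> a")
    case True
    hence vb: "v \<notin> b" using vin by simp
    have "a = insert v b"
    proof (rule set_eqI, rule iffI)
      fix x assume "x \<in> a" thus "x \<in> insert v b" using oth(1) by blast
    next
      fix x assume "x \<in> insert v b" thus "x \<in> a" using oth(2) True vb by (metis insertE)
    qed
    thus ?thesis using vb by blast
  next
    case False
    hence vb: "v \<in> b" using vin by simp
    have "b = insert v a"
    proof (rule set_eqI, rule iffI)
      fix x assume "x \<in> b" thus "x \<in> insert v a" using oth(2) by blast
    next
      fix x assume "x \<in> insert v a" thus "x \<in> b" using oth(1) False vb by (metis insertE)
    qed
    thus ?thesis using False by blast
  qed
qed

lemma q_sym: "hc_q K L a b > 0 \<Longrightarrow> hc_q K L b a > 0"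
proof (cases "a = b")
  case False
  assume "hc_q K L a b > 0"
  hence "ndiff a b = 1" using q_pos_D False by blast
  thus ?thesis using q_pos ndiff_sym by metis
qed simp

abbreviation "RE \<equiv> reach (hc_X K L) hc_H (hc_q K L)"

lemma reach_remove:
  assumes "\<sigma> \<in> hc_X K L"
  shows "finite R \<Longrightarrow> R \<subseteq> \<sigma> \<Longrightarrow> RE (hc_H \<sigma> + int (card R)) \<sigma> (\<sigma> - R)"
proof (induction R rule: finite_induct)
  case empty thus ?case using assms by (auto intro!: reach_refl)
next
  case (insert r R)
  have fs: "finite \<sigma>" using fin_conf[OF assms] .
  have IH: "RE (hc_H \<sigma> + int (card (insert r R))) \<sigma> (\<sigma> - R)"
    using insert by (auto intro: reach_mono)
  have e1: "\<sigma> - R = insert r (\<sigma> - insert r R)" "r \<notin> \<sigma> - insert r R" using insert by auto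
  have "hc_q K L (\<sigma> - R) (\<sigma> - insert r R) > 0"
    using q_pos ndiff_ins[OF e1(2)] ndiff_sym e1(1) by metis
  moreover have "\<sigma> - insert r R \<in> hc_X K L" using X_sub[OF assms] by blast
  moreover have "hc_H (\<sigma> - insert r R) \<le> hc_H \<sigma> + int (card (insert r R))"
  proof -
    have "card (\<sigma> - insert r R) = card \<sigma> - card (insert r R)"
      using insert fs by (intro card_Diff_subset) auto
    moreover have "card (insert r R) \<le> card \<sigma>" using insert fs by (intro card_mono) auto
    ultimately show ?thesis unfolding hc_H_def by simp
  qed
  ultimately show ?case using reach_step[OF IH] by blast
qed

lemma conn: "a \<in> hc_X K L \<Longrightarrow> b \<in> hc_X K L \<Longrightarrow> \<exists>h. RE h a b"
proof -
  assume ab: "a \<in> hc_X K L" "b \<in> hc_X K L"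
  have ra: "RE (hc_H a + int (card a)) a {}" using reach_remove[OF ab(1), of a] fin_conf[OF ab(1)] by simp
  have rb: "RE (hc_H b + int (card b)) b {}" using reach_remove[OF ab(2), of b] fin_conf[OF ab(2)] by simp
  have sym: "\<And>x y. x \<in> hc_X K L \<Longrightarrow> y \<in> hc_X K L \<Longrightarrow> hc_q K L x y > 0 \<Longrightarrow> hc_q K L y x > 0"
    using q_sym by blast
  let ?h = "max (hc_H a + int (card a)) (hc_H b + int (card b))"
  have "RE ?h a {}" using reach_mono[OF ra] by simp
  moreover have "RE ?h {} b" using reach_rev[OF sym reach_mono[OF rb]] by simp
  ultimately have "RE ?h a b" by (rule reach_trans)
  thus ?thesis by blast
qed

sublocale LS "hc_X K L" hc_H "hc_q K L"
  by unfold_locales (use X_fin q_sym conn in auto)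

end

context grid begin

definition evs :: "nat \<Rightarrow> nat \<Rightarrow> nat \<times> nat" where "evs c i = (c, 2*i + c mod 2)"
definition ods :: "nat \<Rightarrow> nat \<Rightarrow> nat \<times> nat" where "ods c i = (c, 2*i + 1 - c mod 2)"
definition emp :: "(nat \<times> nat) set \<Rightarrow> nat \<Rightarrow> nat \<Rightarrow> bool" where
  "emp \<sigma> c i \<longleftrightarrow> (c, 2*i) \<notin> \<sigma> \<and> (c, 2*i+1) \<notin> \<sigma>"
definition Ecells :: "(nat \<times> nat) set \<Rightarrow> (nat \<times> nat) set" where
  "Ecells \<sigma> = {ci. fst ci < L \<and> snd ci < n \<and> emp \<sigma> (fst ci) (snd ci)}"
definition D :: "(nat \<times> nat) set \<Rightarrow> nat" where "D \<sigma> = card (Ecells \<sigma>)"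
definition Eful where "Eful \<sigma> i \<longleftrightarrow> (\<forall>c<L. evs c i \<in> \<sigma>)"
definition Oful where "Oful \<sigma> i \<longleftrightarrow> (\<forall>c<L. ods c i \<in> \<sigma>)"
definition colfull where "colfull \<sigma> c \<longleftrightarrow> (\<forall>i<n. \<not> emp \<sigma> c i)"
definition rowfull where "rowfull \<sigma> i \<longleftrightarrow> (\<forall>c<L. \<not> emp \<sigma> c i)"

lemma ev_cases: "(evs c i = (c,2*i) \<and> ods c i = (c,2*i+1)) \<or> (evs c i = (c,2*i+1) \<and> ods c i = (c,2*i))"
proof (cases "c mod 2 = 0")
  case True thus ?thesis unfolding evs_def ods_def by simp
next
  case False hence "c mod 2 = 1" by presburger
  thus ?thesis unfolding evs_def ods_def by simp
qed

lemma fst_ev[simp]: "fst (evs c i) = c" and fst_od[simp]: "fst (ods c i) = c"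
  unfolding evs_def ods_def by simp_all

lemma emp_iff: "emp \<sigma> c i \<longleftrightarrow> evs c i \<notin> \<sigma> \<and> ods c i \<notin> \<sigma>"
  using ev_cases[of c i] unfolding emp_def by auto

lemma adj_cell: "cyl_adj K (c, 2*i) (c, 2*i+1)"
  unfolding cyl_adj_def by simp

lemma adj_evod: "cyl_adj K (evs c i) (ods c i)"
  using ev_cases[of c i] adj_cell adj_sym by metis

lemma cell_sites: "c < L \<Longrightarrow> i < n \<Longrightarrow> (c, 2*i) \<in> sites K L \<and> (c, 2*i+1) \<in> sites K L"
  unfolding sites_def using K_eq by auto

lemma evod_sites: "c < L \<Longrightarrow> i < n \<Longrightarrow> evs c i \<in> sites K L \<and> ods c i \<in> sites K L"
  using ev_cases[of c i] cell_sites[of c i] by metis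

lemma par_ev: "par (evs c i) = 0"
  unfolding par_def evs_def by (simp; presburger)
lemma par_od: "par (ods c i) = 1"
  unfolding par_def ods_def by (simp; presburger)

lemma indep: "\<sigma> \<in> hc_X K L \<Longrightarrow> v \<in> \<sigma> \<Longrightarrow> w \<in> \<sigma> \<Longrightarrow> cyl_adj K v w \<Longrightarrow> False"
  unfolding X_iff by blast

lemma Ecells_sub: "Ecells \<sigma> \<subseteq> {0..<L} \<times> {0..<n}"
  unfolding Ecells_def by (auto simp: mem_Times_iff)

lemma Ecells_fin: "finite (Ecells \<sigma>)"
  using Ecells_sub finite_subset by blast

lemma cell_inj: "\<sigma> \<in> hc_X K L \<Longrightarrow> inj_on (\<lambda>v. (fst v, snd v div 2)) \<sigma>"
proof (rule inj_onI)
  fix v w assume s: "\<sigma> \<in> hc_X K L" and vw: "v \<in> \<sigma>" "w \<in> \<sigma>"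
    and eq: "(fst v, snd v div 2) = (fst w, snd w div 2)"
  obtain c r c' r' where v: "v = (c,r)" and w: "w = (c',r')" by (cases v, cases w) auto
  have cc: "c = c'" and rr: "r div 2 = r' div 2" using eq v w by auto
  show "v = w"
  proof (rule ccontr)
    assume "v \<noteq> w"
    hence "r \<noteq> r'" using cc v w by simp
    hence "r' = r + 1 \<or> r = r' + 1" using rr by presburger
    hence "cyl_adj K v w" unfolding cyl_adj_def v w cc by auto
    thus False using indep[OF s vw] by blast
  qed
qed

lemma cell_img: "\<sigma> \<in> hc_X K L \<Longrightarrow> (\<lambda>v. (fst v, snd v div 2)) ` \<sigma> = ({0..<L} \<times> {0..<n}) - Ecells \<sigma>"
proof (rule set_eqI, rule iffI)
  fix x assume s: "\<sigma> \<in> hc_X K L" and x: "x \<in> (\<lambda>v. (fst v, snd v div 2)) ` \<sigma>"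
  then obtain c r where cr: "(c,r) \<in> \<sigma>" "x = (c, r div 2)" by auto
  have "(c,r) \<in> sites K L" using s cr unfolding X_iff by blast
  hence cl: "c < L" "r < K" unfolding sites_def by auto
  hence rn: "r div 2 < n" using K_eq by simp
  have "r = 2*(r div 2) \<or> r = 2*(r div 2) + 1" by presburger
  hence "\<not> emp \<sigma> c (r div 2)" unfolding emp_def using cr(1) by (elim disjE) (metis, metis)
  thus "x \<in> ({0..<L} \<times> {0..<n}) - Ecells \<sigma>" using cr cl rn unfolding Ecells_def by simp
next
  fix x assume x: "x \<in> ({0..<L} \<times> {0..<n}) - Ecells \<sigma>"
  obtain c i where ci: "x = (c,i)" by (cases x) auto
  have x1: "(c,i) \<in> {0..<L} \<times> {0..<n}" "(c,i) \<notin> Ecells \<sigma>" using x ci by simp_all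
  have b: "c < L" "i < n" using x1(1) by simp_all
  have "\<not> emp \<sigma> c i" using x1(2) b unfolding Ecells_def by simp
  hence "(c, 2*i) \<in> \<sigma> \<or> (c, 2*i+1) \<in> \<sigma>" unfolding emp_def by simp
  thus "x \<in> (\<lambda>v. (fst v, snd v div 2)) ` \<sigma>"
  proof
    assume a: "(c, 2*i) \<in> \<sigma>"
    have "x = (\<lambda>v. (fst v, snd v div 2)) (c, 2*i)" using ci by simp
    thus ?thesis using a by (rule image_eqI)
  next
    assume a: "(c, 2*i+1) \<in> \<sigma>"
    have "x = (\<lambda>v. (fst v, snd v div 2)) (c, 2*i+1)" using ci by simp
    thus ?thesis using a by (rule image_eqI)
  qed
qed

lemma card_D: "\<sigma> \<in> hc_X K L \<Longrightarrow> card \<sigma> + D \<sigma> = L * n"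
proof -
  assume s: "\<sigma> \<in> hc_X K L"
  have "card \<sigma> = card ((\<lambda>v. (fst v, snd v div 2)) ` \<sigma>)" using card_image[OF cell_inj[OF s]] by simp
  also have "\<dots> = card ({0..<L} \<times> {0..<n}) - card (Ecells \<sigma>)"
    unfolding cell_img[OF s] using Ecells_sub by (intro card_Diff_subset Ecells_fin)
  also have "\<dots> = L * n - D \<sigma>" unfolding D_def by simp
  finally have "card \<sigma> = L * n - D \<sigma>" .
  moreover have "D \<sigma> \<le> L * n" unfolding D_def
    using card_mono[OF _ Ecells_sub] by simp
  ultimately show ?thesis by simp
qed

lemma D_ins: "\<sigma> \<in> hc_X K L \<Longrightarrow> y \<notin> \<sigma> \<Longrightarrow> insert y \<sigma> \<in> hc_X K L \<Longrightarrow> D (insert y \<sigma>) + 1 = D \<sigma>"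
  using card_D[of \<sigma>] card_D[of "insert y \<sigma>"] fin_conf[of \<sigma>] by simp

lemma hor_adj: "Suc c < L \<Longrightarrow> cyl_adj K (evs c i) (ods (Suc c) i) \<and> cyl_adj K (ods c i) (evs (Suc c) i)"
proof -
  have "Suc c mod 2 = 1 - c mod 2" by presburger
  moreover have "c mod 2 \<le> 1" by simp
  ultimately show ?thesis unfolding cyl_adj_def evs_def ods_def by auto
qed

lemma row_mono: "\<sigma> \<in> hc_X K L \<Longrightarrow> i < n \<Longrightarrow> rowfull \<sigma> i \<Longrightarrow> Eful \<sigma> i \<or> Oful \<sigma> i"
proof -
  assume s: "\<sigma> \<in> hc_X K L" and i: "i < n" and rf: "rowfull \<sigma> i"
  have ne: "\<And>c. c < L \<Longrightarrow> evs c i \<in> \<sigma> \<or> ods c i \<in> \<sigma>" using rf unfolding rowfull_def emp_iff by blast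
  show ?thesis
  proof (cases "evs 0 i \<in> \<sigma>")
    case True
    have "\<forall>c. c < L \<longrightarrow> evs c i \<in> \<sigma>"
    proof (intro allI)
      fix c show "c < L \<longrightarrow> evs c i \<in> \<sigma>"
      proof (induction c)
        case 0 show ?case using True by simp
      next
        case (Suc c)
        show ?case
        proof
          assume c: "Suc c < L"
          hence a: "evs c i \<in> \<sigma>" using Suc by simp
          have "ods (Suc c) i \<notin> \<sigma>" using indep[OF s a] hor_adj[OF c] by blast
          thus "evs (Suc c) i \<in> \<sigma>" using ne[OF c] by blast
        qed
      qed
    qed
    thus ?thesis unfolding Eful_def by blast
  next
    case False
    hence T: "ods 0 i \<in> \<sigma>" using ne[of 0] L2 by simp
    have "\<forall>c. c < L \<longrightarrow> ods c i \<in> \<sigma>"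
    proof (intro allI)
      fix c show "c < L \<longrightarrow> ods c i \<in> \<sigma>"
      proof (induction c)
        case 0 show ?case using T by simp
      next
        case (Suc c)
        show ?case
        proof
          assume c: "Suc c < L"
          hence a: "ods c i \<in> \<sigma>" using Suc by simp
          have "evs (Suc c) i \<notin> \<sigma>" using indep[OF s a] hor_adj[OF c] by blast
          thus "ods (Suc c) i \<in> \<sigma>" using ne[OF c] by blast
        qed
      qed
    qed
    thus ?thesis unfolding Oful_def by blast
  qed
qed

lemma vert_adj: "Suc i < n \<Longrightarrow> cyl_adj K (c, 2*i+1) (c, 2*Suc i)"
  unfolding cyl_adj_def by simp

lemma wrap_adj: "cyl_adj K (c, 2*(n-1)+1) (c, 0)"
proof -
  have e: "2*(n-1)+1 = K - 1" using K_eq n_pos by simp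
  have "{2*(n-1)+1, 0} = {0, K - 1}" unfolding e by (rule insert_commute)
  thus ?thesis unfolding cyl_adj_def fst_conv snd_conv by blast
qed

lemma col_mono: "\<sigma> \<in> hc_X K L \<Longrightarrow> colfull \<sigma> c \<Longrightarrow>
  (\<forall>i<n. (c, 2*i) \<in> \<sigma>) \<or> (\<forall>i<n. (c, 2*i+1) \<in> \<sigma>)"
proof -
  assume s: "\<sigma> \<in> hc_X K L" and cf: "colfull \<sigma> c"
  have ne: "\<And>i. i < n \<Longrightarrow> (c, 2*i) \<in> \<sigma> \<or> (c, 2*i+1) \<in> \<sigma>" using cf unfolding colfull_def emp_def by blast
  show ?thesis
  proof (cases "(c, 0) \<in> \<sigma>")
    case True
    have top: "(c, 2*(n-1)+1) \<notin> \<sigma>" using indep[OF s _ True] wrap_adj by blast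
    have "\<forall>j. j < n \<longrightarrow> (c, 2*(n-1-j)) \<in> \<sigma>"
    proof (intro allI)
      fix j show "j < n \<longrightarrow> (c, 2*(n-1-j)) \<in> \<sigma>"
      proof (induction j)
        case 0 show ?case using ne[of "n-1"] top n_pos by simp
      next
        case (Suc j)
        show ?case
        proof
          assume j: "Suc j < n"
          let ?i = "n - 1 - Suc j"
          have a: "(c, 2*Suc ?i) \<in> \<sigma>" using Suc j by (simp add: Suc_diff_Suc)
          have "Suc ?i < n" using j by simp
          hence "(c, 2*?i+1) \<notin> \<sigma>" using indep[OF s _ a] vert_adj by blast
          thus "(c, 2*(n-1-Suc j)) \<in> \<sigma>" using ne[of ?i] j by simp
        qed
      qed
    qed
    hence "\<forall>i<n. (c, 2*i) \<in> \<sigma>"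
    proof (intro allI impI)
      fix i
      assume h: "\<forall>j. j < n \<longrightarrow> (c, 2*(n-1-j)) \<in> \<sigma>" and i: "i < n"
      have "n - 1 - i < n" using n_pos by simp
      hence "(c, 2*(n-1-(n-1-i))) \<in> \<sigma>" using h by blast
      moreover have "n - 1 - (n - 1 - i) = i" using i by simp
      ultimately show "(c, 2*i) \<in> \<sigma>" by simp
    qed
    thus ?thesis by blast
  next
    case False
    hence T: "(c, 1) \<in> \<sigma>" using ne[of 0] n_pos by simp
    have "\<forall>i. i < n \<longrightarrow> (c, 2*i+1) \<in> \<sigma>"
    proof (intro allI)
      fix i show "i < n \<longrightarrow> (c, 2*i+1) \<in> \<sigma>"
      proof (induction i)
        case 0 show ?case using T by simp
      next
        case (Suc i)
        show ?case
        proof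
          assume i: "Suc i < n"
          hence a: "(c, 2*i+1) \<in> \<sigma>" using Suc by simp
          have "(c, 2*Suc i) \<notin> \<sigma>" using indep[OF s a] vert_adj[OF i] by blast
          thus "(c, 2*Suc i+1) \<in> \<sigma>" using ne[OF i] by blast
        qed
      qed
    qed
    thus ?thesis by blast
  qed
qed

lemma col_contra: "\<sigma> \<in> hc_X K L \<Longrightarrow> colfull \<sigma> c \<Longrightarrow> i < n \<Longrightarrow> j < n \<Longrightarrow>
   evs c i \<in> \<sigma> \<Longrightarrow> ods c j \<in> \<sigma> \<Longrightarrow> False"
proof -
  assume s: "\<sigma> \<in> hc_X K L" and cf: "colfull \<sigma> c" and ij: "i < n" "j < n"
    and a: "evs c i \<in> \<sigma>" "ods c j \<in> \<sigma>"
  have A: "\<And>k. (c, 2*k) \<in> \<sigma> \<Longrightarrow> (c, 2*k+1) \<in> \<sigma> \<Longrightarrow> False" using indep[OF s] adj_cell by blast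
  show False
  proof (cases "c mod 2 = 0")
    case True
    hence e: "evs c i = (c, 2*i)" "ods c j = (c, 2*j+1)" unfolding evs_def ods_def by simp_all
    show False using col_mono[OF s cf] A a ij unfolding e by blast
  next
    case False
    hence "c mod 2 = 1" by presburger
    hence e: "evs c i = (c, 2*i+1)" "ods c j = (c, 2*j)" unfolding evs_def ods_def by simp_all
    show False using col_mono[OF s cf] A a ij unfolding e by blast
  qed
qed

lemma snd_cover: "\<forall>i<n. \<exists>c<L. emp \<sigma> c i \<Longrightarrow> n \<le> D \<sigma>"
proof -
  assume h: "\<forall>i<n. \<exists>c<L. emp \<sigma> c i"
  have sub: "{0..<n} \<subseteq> snd ` Ecells \<sigma>"
  proof
    fix i assume i: "i \<in> {0..<n}"
    then obtain c where c: "c < L" "emp \<sigma> c i" using h by auto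
    hence "(c,i) \<in> Ecells \<sigma>" unfolding Ecells_def using i by simp
    thus "i \<in> snd ` Ecells \<sigma>" using image_eqI[of i snd "(c,i)"] by simp
  qed
  have "n \<le> card (snd ` Ecells \<sigma>)" using card_mono[OF finite_imageI[OF Ecells_fin] sub] by simp
  also have "\<dots> \<le> D \<sigma>" unfolding D_def by (rule card_image_le[OF Ecells_fin])
  finally show ?thesis .
qed

lemma fst_cover: "\<forall>c<L. \<exists>i<n. emp \<sigma> c i \<Longrightarrow> L \<le> card (fst ` Ecells \<sigma>)"
proof -
  assume h: "\<forall>c<L. \<exists>i<n. emp \<sigma> c i"
  have sub: "{0..<L} \<subseteq> fst ` Ecells \<sigma>"
  proof
    fix c assume c: "c \<in> {0..<L}"
    then obtain i where i: "i < n" "emp \<sigma> c i" using h by auto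
    hence "(c,i) \<in> Ecells \<sigma>" unfolding Ecells_def using c by simp
    thus "c \<in> fst ` Ecells \<sigma>" using image_eqI[of c fst "(c,i)"] by simp
  qed
  show ?thesis using card_mono[OF finite_imageI[OF Ecells_fin] sub] by simp
qed

lemma ex_rowfull: "D \<sigma> < n \<Longrightarrow> \<exists>i<n. rowfull \<sigma> i"
proof (rule ccontr)
  assume d: "D \<sigma> < n" and "\<not> (\<exists>i<n. rowfull \<sigma> i)"
  hence "\<forall>i<n. \<exists>c<L. emp \<sigma> c i" unfolding rowfull_def by blast
  thus False using snd_cover d by fastforce
qed

lemma ex_colfull: "D \<sigma> < L \<Longrightarrow> \<exists>c<L. colfull \<sigma> c"
proof (rule ccontr)
  assume d: "D \<sigma> < L" and "\<not> (\<exists>c<L. colfull \<sigma> c)"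
  hence "\<forall>c<L. \<exists>i<n. emp \<sigma> c i" unfolding colfull_def by blast
  hence "L \<le> card (fst ` Ecells \<sigma>)" by (rule fst_cover)
  also have "\<dots> \<le> D \<sigma>" unfolding D_def by (rule card_image_le[OF Ecells_fin])
  finally show False using d by simp
qed

lemma col_one: "(\<forall>c<L. \<not> colfull \<sigma> c) \<Longrightarrow> D \<sigma> \<le> L \<Longrightarrow> c < L \<Longrightarrow> i < n \<Longrightarrow> j < n \<Longrightarrow>
   emp \<sigma> c i \<Longrightarrow> emp \<sigma> c j \<Longrightarrow> i = j"
proof (rule ccontr)
  assume a: "\<forall>c<L. \<not> colfull \<sigma> c" "D \<sigma> \<le> L" "c < L" "i < n" "j < n" "emp \<sigma> c i" "emp \<sigma> c j" "i \<noteq> j"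
  hence "\<forall>c<L. \<exists>i<n. emp \<sigma> c i" unfolding colfull_def by blast
  hence L1: "L \<le> card (fst ` Ecells \<sigma>)" by (rule fst_cover)
  have m: "(c,i) \<in> Ecells \<sigma>" "(c,j) \<in> Ecells \<sigma>" using a unfolding Ecells_def by simp_all
  have ni: "\<not> inj_on fst (Ecells \<sigma>)"
  proof
    assume "inj_on fst (Ecells \<sigma>)"
    hence "(c,i) = (c,j)" using inj_onD[of fst "Ecells \<sigma>" "(c,i)" "(c,j)"] m by simp
    thus False using a(8) by simp
  qed
  hence "card (fst ` Ecells \<sigma>) \<noteq> card (Ecells \<sigma>)" using inj_on_iff_eq_card[OF Ecells_fin] by blast
  moreover have "card (fst ` Ecells \<sigma>) \<le> card (Ecells \<sigma>)" by (rule card_image_le[OF Ecells_fin])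
  ultimately have "card (fst ` Ecells \<sigma>) < D \<sigma>" unfolding D_def by simp
  thus False using L1 a(2) by simp
qed

end

context grid begin

abbreviation "m \<equiv> min n L"
lemma m_pos: "m \<ge> 1" using n_pos L2 by simp

definition Inv where "Inv \<sigma> \<longleftrightarrow> (D \<sigma> < m \<longrightarrow> (\<exists>i<n. Eful \<sigma> i)) \<and>
  (D \<sigma> = m \<longrightarrow> (\<forall>y. y \<notin> \<sigma> \<longrightarrow> insert y \<sigma> \<in> hc_X K L \<longrightarrow> (\<exists>i<n. Eful (insert y \<sigma>) i)))"

lemma low_full: "\<sigma> \<in> hc_X K L \<Longrightarrow> D \<sigma> < m \<Longrightarrow> \<exists>j<n. Eful \<sigma> j \<or> Oful \<sigma> j"
proof -
  assume s: "\<sigma> \<in> hc_X K L" and d: "D \<sigma> < m"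
  have "D \<sigma> < n" using d by simp
  then obtain j where "j < n" "rowfull \<sigma> j" using ex_rowfull by blast
  thus ?thesis using row_mono[OF s] by blast
qed

lemma L1: "\<sigma> \<in> hc_X K L \<Longrightarrow> D \<sigma> < m \<Longrightarrow> i < n \<Longrightarrow> j < n \<Longrightarrow> Eful \<sigma> i \<Longrightarrow> Oful \<sigma> j \<Longrightarrow> False"
proof -
  assume s: "\<sigma> \<in> hc_X K L" and d: "D \<sigma> < m" and ij: "i < n" "j < n" and EO: "Eful \<sigma> i" "Oful \<sigma> j"
  have "D \<sigma> < L" using d by simp
  then obtain c where c: "c < L" "colfull \<sigma> c" using ex_colfull by blast
  have "evs c i \<in> \<sigma>" "ods c j \<in> \<sigma>" using EO c(1) unfolding Eful_def Oful_def by blast+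
  thus False using col_contra[OF s c(2) ij] by blast
qed

lemma Eful_mono: "Eful \<sigma> i \<Longrightarrow> \<sigma> \<subseteq> \<tau> \<Longrightarrow> Eful \<tau> i"
  unfolding Eful_def by blast
lemma Oful_mono: "Oful \<sigma> i \<Longrightarrow> \<sigma> \<subseteq> \<tau> \<Longrightarrow> Oful \<tau> i"
  unfolding Oful_def by blast
lemma emp_mono: "emp \<tau> c i \<Longrightarrow> \<sigma> \<subseteq> \<tau> \<Longrightarrow> emp \<sigma> c i"
  unfolding emp_def by blast

lemma critical:
  assumes s: "\<sigma> \<in> hc_X K L" and d: "D \<sigma> = m"
  and x: "x \<notin> \<sigma>" "insert x \<sigma> \<in> hc_X K L" and y: "y \<notin> \<sigma>" "insert y \<sigma> \<in> hc_X K L"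
  and i: "i < n" "Eful (insert x \<sigma>) i"
  shows "\<exists>j<n. Eful (insert y \<sigma>) j"
proof -
  have dr: "D (insert x \<sigma>) < m" using D_ins[OF s x] d m_pos by linarith
  have dt: "D (insert y \<sigma>) < m" using D_ins[OF s y] d m_pos by linarith
  obtain j where j: "j < n" "Eful (insert y \<sigma>) j \<or> Oful (insert y \<sigma>) j" using low_full[OF y(2) dt] by blast
  show ?thesis
  proof (cases "Eful (insert y \<sigma>) j")
    case True thus ?thesis using j by blast
  next
    case False
    hence Oj: "Oful (insert y \<sigma>) j" using j by blast
    show ?thesis
    proof (cases "Eful \<sigma> i")
      case True thus ?thesis using Eful_mono[OF True, of "insert y \<sigma>"] i by blast
    next
      case nEi: False
      show ?thesis
      proof (cases "Oful \<sigma> j")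
        case True
        hence "Oful (insert x \<sigma>) j" using Oful_mono by blast
        thus ?thesis using L1[OF x(2) dr i(1) j(1) i(2)] by blast
      next
        case nOj: False
        obtain cx where cx: "cx < L" "evs cx i \<notin> \<sigma>" using nEi unfolding Eful_def by blast
        have xe: "x = evs cx i" using i(2) cx unfolding Eful_def by blast
        have Ei': "evs c i \<in> \<sigma>" if "c < L" "c \<noteq> cx" for c
        proof -
          have "evs c i \<in> insert x \<sigma>" using i(2) that unfolding Eful_def by blast
          moreover have "evs c i \<noteq> x" using xe that fst_ev by metis
          ultimately show ?thesis by blast
        qed
        obtain cy where cy: "cy < L" "ods cy j \<notin> \<sigma>" using nOj unfolding Oful_def by blast
        have ye: "y = ods cy j" using Oj cy unfolding Oful_def by blast
        have Oj': "ods c j \<in> \<sigma>" if "c < L" "c \<noteq> cy" for c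
        proof -
          have "ods c j \<in> insert y \<sigma>" using Oj that unfolding Oful_def by blast
          moreover have "ods c j \<noteq> y" using ye that fst_od by metis
          ultimately show ?thesis by blast
        qed
        have oxn: "ods cx i \<notin> \<sigma>"
        proof
          assume "ods cx i \<in> \<sigma>"
          hence "ods cx i \<in> insert x \<sigma>" "evs cx i \<in> insert x \<sigma>" using xe by auto
          thus False using indep[OF x(2)] adj_evod by blast
        qed
        have eyn: "evs cy j \<notin> \<sigma>"
        proof
          assume "evs cy j \<in> \<sigma>"
          hence "evs cy j \<in> insert y \<sigma>" "ods cy j \<in> insert y \<sigma>" using ye by auto
          thus False using indep[OF y(2)] adj_evod by blast
        qed
        have empx: "emp \<sigma> cx i" using emp_iff cx(2) oxn by blast
        have empy: "emp \<sigma> cy j" using emp_iff cy(2) eyn by blast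
        show ?thesis
        proof (cases "i = j")
          case True
          have cxy: "cx = cy"
          proof (rule ccontr)
            assume "cx \<noteq> cy"
            hence "ods cx j \<in> \<sigma>" using Oj' cx(1) by blast
            thus False using oxn True by simp
          qed
          define c where "c = (if cx = 0 then 1 else (0::nat))"
          have c: "c < L" "c \<noteq> cx" unfolding c_def using L2 by auto
          have "evs c i \<in> \<sigma>" using Ei' c by blast
          moreover have "ods c i \<in> \<sigma>" using Oj' c cxy True by blast
          ultimately show ?thesis using indep[OF s] adj_evod by blast
        next
          case False
          show ?thesis
          proof (cases "\<exists>c<L. colfull \<sigma> c")
            case True
            then obtain c where c: "c < L" "colfull \<sigma> c" by blast
            have "c \<noteq> cx" using c(2) empx i(1) unfolding colfull_def by blast
            moreover have "c \<noteq> cy" using c(2) empy j(1) unfolding colfull_def by blast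
            ultimately have "evs c i \<in> \<sigma>" "ods c j \<in> \<sigma>" using Ei' Oj' c(1) by blast+
            thus ?thesis using col_contra[OF s c(2) i(1) j(1)] by blast
          next
            case noc: False
            hence nc: "\<forall>c<L. \<not> colfull \<sigma> c" by blast
            have DL: "D \<sigma> \<le> L" using d by simp
            have cxy: "cx \<noteq> cy"
            proof
              assume "cx = cy"
              hence "emp \<sigma> cx j" using empy by simp
              hence "i = j" using col_one[OF nc DL cx(1) i(1) j(1) empx] by blast
              thus False using False by simp
            qed
            have cf: "colfull (insert y \<sigma>) cy" unfolding colfull_def
            proof (intro allI impI)
              fix i' assume i': "i' < n"
              show "\<not> emp (insert y \<sigma>) cy i'"
              proof (cases "i' = j")
                case True
                thus ?thesis using ye emp_iff by blast
              next
                case False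
                have "\<not> emp \<sigma> cy i'" using col_one[OF nc DL cy(1) i' j(1) _ empy] False by blast
                thus ?thesis using emp_mono[of "insert y \<sigma>" cy i' \<sigma>] by blast
              qed
            qed
            have "evs cy i \<in> insert y \<sigma>" using Ei' cy(1) cxy by blast
            moreover have "ods cy j \<in> insert y \<sigma>" using ye by simp
            ultimately show ?thesis using col_contra[OF y(2) cf i(1) j(1)] by blast
          qed
        qed
      qed
    qed
  qed
qed

lemma inv_add: "\<sigma> \<in> hc_X K L \<Longrightarrow> y \<notin> \<sigma> \<Longrightarrow> insert y \<sigma> \<in> hc_X K L \<Longrightarrow> D \<sigma> \<le> m \<Longrightarrow> Inv \<sigma> \<Longrightarrow>
   Inv (insert y \<sigma>)"
proof -
  assume s: "\<sigma> \<in> hc_X K L" and y: "y \<notin> \<sigma>" "insert y \<sigma> \<in> hc_X K L" and d: "D \<sigma> \<le> m" and I: "Inv \<sigma>"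
  have dd: "D (insert y \<sigma>) + 1 = D \<sigma>" using D_ins[OF s y] .
  have "\<exists>i<n. Eful (insert y \<sigma>) i"
  proof (cases "D \<sigma> = m")
    case True thus ?thesis using I y unfolding Inv_def by blast
  next
    case False
    hence "D \<sigma> < m" using d by (metis le_neq_implies_less)
    then obtain i where "i < n" "Eful \<sigma> i" using I unfolding Inv_def by blast
    thus ?thesis using Eful_mono[of \<sigma> i "insert y \<sigma>"] by blast
  qed
  moreover have lt: "D (insert y \<sigma>) < D \<sigma>" using dd by simp
  moreover have "D (insert y \<sigma>) \<noteq> m" using lt d by (metis leD)
  ultimately show ?thesis unfolding Inv_def by blast
qed

lemma inv_rem: "\<sigma> \<in> hc_X K L \<Longrightarrow> x \<notin> \<sigma> \<Longrightarrow> insert x \<sigma> \<in> hc_X K L \<Longrightarrow> D \<sigma> \<le> m \<Longrightarrow>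
   Inv (insert x \<sigma>) \<Longrightarrow> Inv \<sigma>"
proof -
  assume s: "\<sigma> \<in> hc_X K L" and x: "x \<notin> \<sigma>" "insert x \<sigma> \<in> hc_X K L" and d: "D \<sigma> \<le> m"
    and I: "Inv (insert x \<sigma>)"
  have dd: "D (insert x \<sigma>) + 1 = D \<sigma>" using D_ins[OF s x] .
  hence dl: "D (insert x \<sigma>) < m" using d by simp
  then obtain i where i: "i < n" "Eful (insert x \<sigma>) i" using I unfolding Inv_def by blast
  have A: "\<exists>i<n. Eful \<sigma> i" if dl2: "D \<sigma> < m"
  proof -
    obtain j where j: "j < n" "Eful \<sigma> j \<or> Oful \<sigma> j" using low_full[OF s dl2] by blast
    show ?thesis
    proof (cases "Eful \<sigma> j")
      case True thus ?thesis using j by blast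
    next
      case False
      hence "Oful (insert x \<sigma>) j" using j Oful_mono[of \<sigma> j "insert x \<sigma>"] by blast
      thus ?thesis using L1[OF x(2) dl i(1) j(1) i(2)] by blast
    qed
  qed
  have B: "\<forall>y. y \<notin> \<sigma> \<longrightarrow> insert y \<sigma> \<in> hc_X K L \<longrightarrow> (\<exists>i<n. Eful (insert y \<sigma>) i)" if dm: "D \<sigma> = m"
    using critical[OF s dm x _ _ i] by blast
  show ?thesis unfolding Inv_def using A B by blast
qed

lemma e_sub: "even_conf K L \<subseteq> sites K L" unfolding even_conf_def by blast
lemma o_sub: "odd_conf K L \<subseteq> sites K L" unfolding odd_conf_def by blast

lemma e_X: "even_conf K L \<in> hc_X K L"
  unfolding X_iff
proof (intro conjI ballI notI)
  show "even_conf K L \<subseteq> sites K L" by (rule e_sub)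
  fix v w assume a: "v \<in> even_conf K L" "w \<in> even_conf K L" "cyl_adj K v w"
  have "par v = 0" using a(1) unfolding even_conf_def par_def by (simp add: even_iff_mod_2_eq_zero)
  moreover have "par w = 0" using a(2) unfolding even_conf_def par_def by (simp add: even_iff_mod_2_eq_zero)
  ultimately show False using adj_par[OF a(3)] by simp
qed

lemma o_X: "odd_conf K L \<in> hc_X K L"
  unfolding X_iff
proof (intro conjI ballI notI)
  show "odd_conf K L \<subseteq> sites K L" by (rule o_sub)
  fix v w assume a: "v \<in> odd_conf K L" "w \<in> odd_conf K L" "cyl_adj K v w"
  have "odd (fst v + snd v)" using a(1) unfolding odd_conf_def by simp
  hence pv: "par v = 1" unfolding par_def by presburger
  have "odd (fst w + snd w)" using a(2) unfolding odd_conf_def by simp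
  hence "par w = 1" unfolding par_def by presburger
  thus False using pv adj_par[OF a(3)] by simp
qed

lemma evs_e: "c < L \<Longrightarrow> i < n \<Longrightarrow> evs c i \<in> even_conf K L"
proof -
  assume ci: "c < L" "i < n"
  have "par (evs c i) = 0" by (rule par_ev)
  hence "even (fst (evs c i) + snd (evs c i))" unfolding par_def by presburger
  thus ?thesis using evod_sites[OF ci] unfolding even_conf_def by simp
qed

lemma ods_o: "c < L \<Longrightarrow> i < n \<Longrightarrow> ods c i \<in> odd_conf K L"
proof -
  assume ci: "c < L" "i < n"
  have "par (ods c i) = 1" by (rule par_od)
  hence "odd (fst (ods c i) + snd (ods c i))" unfolding par_def by presburger
  thus ?thesis using evod_sites[OF ci] unfolding odd_conf_def by simp
qed

lemma evs_not_o: "evs c i \<notin> odd_conf K L"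
proof
  assume "evs c i \<in> odd_conf K L"
  hence "odd (fst (evs c i) + snd (evs c i))" unfolding odd_conf_def by simp
  hence "par (evs c i) = 1" unfolding par_def by presburger
  thus False using par_ev by simp
qed

lemma D_e: "D (even_conf K L) = 0"
proof -
  have "Ecells (even_conf K L) = {}"
    unfolding Ecells_def using evs_e emp_iff by auto
  thus ?thesis unfolding D_def by simp
qed

lemma D_o: "D (odd_conf K L) = 0"
proof -
  have "Ecells (odd_conf K L) = {}"
    unfolding Ecells_def using ods_o emp_iff by auto
  thus ?thesis unfolding D_def by simp
qed

lemma card_e: "card (even_conf K L) = L * n" using card_D[OF e_X] D_e by simp
lemma card_o: "card (odd_conf K L) = L * n" using card_D[OF o_X] D_o by simp

lemma Inv_e: "Inv (even_conf K L)"
proof -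
  have "Eful (even_conf K L) 0" unfolding Eful_def using evs_e n_pos by simp
  moreover have "0 < n" using n_pos by simp
  ultimately have "\<exists>i<n. Eful (even_conf K L) i" by blast
  moreover have "D (even_conf K L) \<noteq> m" using D_e m_pos by simp
  ultimately show ?thesis unfolding Inv_def by blast
qed

lemma not_Inv_o: "\<not> Inv (odd_conf K L)"
proof
  assume "Inv (odd_conf K L)"
  then obtain i where "i < n" "Eful (odd_conf K L) i" unfolding Inv_def using D_o m_pos by auto
  hence "evs 0 i \<in> odd_conf K L" unfolding Eful_def using L2 by simp
  thus False using evs_not_o by blast
qed

lemma path_inv: "is_path (hc_X K L) (hc_q K L) p \<Longrightarrow> hd p = even_conf K L \<Longrightarrow> (\<forall>s\<in>set p. D s \<le> m) \<Longrightarrow>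
  Inv (last p)"
proof (induction p rule: rev_induct)
  case Nil thus ?case by (simp add: is_path_def)
next
  case (snoc x xs)
  show ?case
  proof (cases "xs = []")
    case True thus ?thesis using snoc Inv_e by simp
  next
    case False
    have *: "is_path (hc_X K L) (hc_q K L) xs \<and> hc_q K L (last xs) x > 0 \<and> x \<in> hc_X K L"
      using is_path_butlast[OF snoc(2) False] .
    have IH: "Inv (last xs)" using snoc * False by simp
    have lx: "last xs \<in> hc_X K L" using * False unfolding is_path_def by auto
    have dx: "D x \<le> m" using snoc(4) by simp
    have dl: "D (last xs) \<le> m" using snoc(4) False by simp
    show ?thesis
    proof (cases "last xs = x")
      case True thus ?thesis using IH by simp
    next
      case ne: False
      hence "ndiff (last xs) x = 1" using q_pos_D * by blast
      hence "(\<exists>v. v \<notin> last xs \<and> x = insert v (last xs)) \<or> (\<exists>v. v \<notin> x \<and> last xs = insert v x)"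
        by (rule ndiff_1)
      thus ?thesis
      proof
        assume "\<exists>v. v \<notin> last xs \<and> x = insert v (last xs)"
        then obtain v where v: "v \<notin> last xs" "x = insert v (last xs)" by blast
        thus ?thesis using inv_add[OF lx v(1) _ dl IH] * by simp
      next
        assume "\<exists>v. v \<notin> x \<and> last xs = insert v x"
        then obtain v where v: "v \<notin> x" "last xs = insert v x" by blast
        thus ?thesis using inv_rem[of x v] * lx dx IH by simp
      qed
    qed
  qed
qed

lemma lower_path: "is_path (hc_X K L) (hc_q K L) p \<Longrightarrow> hd p = even_conf K L \<Longrightarrow> last p = odd_conf K L \<Longrightarrow>
  \<exists>s\<in>set p. m + 1 \<le> D s"
proof (rule ccontr)
  assume a: "is_path (hc_X K L) (hc_q K L) p" "hd p = even_conf K L" "last p = odd_conf K L"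
    "\<not> (\<exists>s\<in>set p. m + 1 \<le> D s)"
  hence "\<forall>s\<in>set p. D s \<le> m" by auto
  hence "Inv (last p)" using path_inv a by blast
  thus False using not_Inv_o a by simp
qed

lemma H_D: "\<sigma> \<in> hc_X K L \<Longrightarrow> hc_H \<sigma> = int (D \<sigma>) - int (L * n)"
proof -
  assume s: "\<sigma> \<in> hc_X K L"
  have "int (card \<sigma>) + int (D \<sigma>) = int (L * n)" using card_D[OF s] by (metis of_nat_add)
  thus ?thesis unfolding hc_H_def by linarith
qed

lemma H_e: "hc_H (even_conf K L) = - int (L * n)"
  using card_e unfolding hc_H_def by simp

lemma e_min: "\<sigma> \<in> hc_X K L \<Longrightarrow> hc_H (even_conf K L) \<le> hc_H \<sigma>"
  using H_D H_e by simp

lemma Phi_lb: "hc_H (even_conf K L) + int m + 1 \<le> Phi (hc_X K L) hc_H (hc_q K L) (even_conf K L) (odd_conf K L)"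
proof (rule Phi_lower[OF e_X o_X])
  fix p assume p: "is_path (hc_X K L) (hc_q K L) p" "hd p = even_conf K L" "last p = odd_conf K L"
  obtain s where s: "s \<in> set p" "m + 1 \<le> D s" using lower_path[OF p] by blast
  have "s \<in> hc_X K L" using s(1) p(1) unfolding is_path_def by auto
  hence "hc_H s = int (D s) - int (L * n)" by (rule H_D)
  thus "\<exists>s\<in>set p. hc_H (even_conf K L) + int m + 1 \<le> hc_H s" using s H_e by force
qed

end

context grid begin

definition Psites :: "nat \<Rightarrow> (nat \<times> nat) set" where "Psites P = {v \<in> sites K L. par v = P}"
definition nbr :: "(nat \<times> nat) set \<Rightarrow> (nat \<times> nat) set" where
  "nbr V = {w \<in> sites K L. \<exists>v\<in>V. cyl_adj K v w}"
definition tau where "tau \<sigma> V = (\<sigma> - nbr V) \<union> V"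

lemma par_le: "par v \<le> 1" unfolding par_def by simp

lemma par_other: "P \<le> 1 \<Longrightarrow> par w \<noteq> P \<Longrightarrow> par w = 1 - P"
  using par_le[of w] by linarith

lemma nbr_par: "P \<le> 1 \<Longrightarrow> V \<subseteq> Psites P \<Longrightarrow> w \<in> nbr V \<Longrightarrow> w \<in> Psites (1 - P)"
proof -
  assume P: "P \<le> 1" and V: "V \<subseteq> Psites P" and w: "w \<in> nbr V"
  then obtain v where v: "v \<in> V" "cyl_adj K v w" "w \<in> sites K L" unfolding nbr_def by blast
  have "par v = P" using v V unfolding Psites_def by blast
  hence "par w \<noteq> P" using adj_par[OF v(2)] by simp
  thus ?thesis using par_other[OF P] v(3) unfolding Psites_def by simp
qed

lemma Psites_par: "v \<in> Psites P \<Longrightarrow> w \<in> Psites P \<Longrightarrow> \<not> cyl_adj K v w"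
proof
  assume a: "v \<in> Psites P" "w \<in> Psites P" "cyl_adj K v w"
  hence "par v = P" "par w = P" unfolding Psites_def by simp_all
  thus False using adj_par[OF a(3)] by simp
qed

lemma tau_X: "\<sigma> \<in> hc_X K L \<Longrightarrow> V \<subseteq> Psites P \<Longrightarrow> tau \<sigma> V \<in> hc_X K L"
  unfolding X_iff
proof (intro conjI ballI notI)
  assume s: "\<sigma> \<subseteq> sites K L \<and> (\<forall>v\<in>\<sigma>. \<forall>w\<in>\<sigma>. \<not> cyl_adj K v w)" and V: "V \<subseteq> Psites P"
  show "tau \<sigma> V \<subseteq> sites K L" using s V unfolding tau_def Psites_def by blast
  fix a b assume ab: "a \<in> tau \<sigma> V" "b \<in> tau \<sigma> V" "cyl_adj K a b"
  show False
  proof (cases "a \<in> V")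
    case aV: True
    show False
    proof (cases "b \<in> V")
      case True thus False using Psites_par aV V ab(3) by blast
    next
      case False
      hence "b \<in> \<sigma>" "b \<notin> nbr V" using ab(2) unfolding tau_def by auto
      moreover have "b \<in> sites K L" using s \<open>b \<in> \<sigma>\<close> by blast
      ultimately show False using aV ab(3) unfolding nbr_def by blast
    qed
  next
    case aV: False
    hence a: "a \<in> \<sigma>" "a \<notin> nbr V" using ab(1) unfolding tau_def by auto
    show False
    proof (cases "b \<in> V")
      case True
      have "a \<in> sites K L" using s a by blast
      moreover have "cyl_adj K b a" using ab(3) adj_sym by blast
      ultimately show False using a True unfolding nbr_def by blast
    next
      case False
      hence "b \<in> \<sigma>" using ab(2) unfolding tau_def by auto
      thus False using s a ab(3) by blast
    qed
  qed
qed

lemma tau_bound: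
  assumes s: "\<sigma> \<in> hc_X K L" and P: "P \<le> 1" and V: "V \<subseteq> Psites P"
  and phi: "\<And>w. w \<in> Psites (1-P) - Exc \<Longrightarrow> \<phi> w \<in> Psites P \<and> cyl_adj K w (\<phi> w)"
  and phinj: "inj_on \<phi> (Psites (1-P) - Exc)"
  and cl: "\<And>w. w \<in> nbr V \<Longrightarrow> w \<in> Psites (1-P) - Exc \<Longrightarrow> \<phi> w \<in> V"
  shows "card \<sigma> \<le> card (tau \<sigma> V) + card (\<sigma> \<inter> Exc)"
proof -
  have fs: "finite \<sigma>" using fin_conf[OF s] .
  have "V \<subseteq> sites K L" using V unfolding Psites_def by blast
  hence fV: "finite V" using finite_subset sites_fin by blast
  define A where "A = \<sigma> \<inter> (nbr V \<union> V)"
  have fA: "finite A" using fs unfolding A_def by simp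
  have sub: "A \<subseteq> \<sigma>" unfolding A_def by blast
  have c1: "card \<sigma> = card (\<sigma> - A) + card A"
    using card_Diff_subset[OF fA sub] card_mono[OF fs sub] by linarith
  have t: "tau \<sigma> V = (\<sigma> - A) \<union> V" unfolding tau_def A_def by blast
  have c2: "card (tau \<sigma> V) = card (\<sigma> - A) + card V"
  proof -
    have "finite (\<sigma> - A)" using fs by simp
    moreover have "(\<sigma> - A) \<inter> V = {}" unfolding A_def by blast
    ultimately show ?thesis unfolding t using card_Un_disjoint fV by blast
  qed
  have c3: "card A \<le> card (A \<inter> Exc) + card (A - Exc)"
    using card_Un_le[of "A \<inter> Exc" "A - Exc"] by (simp add: Int_Diff_Un)
  have c4: "card (A \<inter> Exc) \<le> card (\<sigma> \<inter> Exc)"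
    using fs unfolding A_def by (intro card_mono) auto
  define g where "g w = (if par w = P then w else \<phi> w)" for w
  have gV: "g w \<in> V" if w: "w \<in> A - Exc" for w
  proof (cases "w \<in> V")
    case True
    hence "par w = P" using V unfolding Psites_def by blast
    thus ?thesis using True unfolding g_def by simp
  next
    case False
    hence wn: "w \<in> nbr V" using w unfolding A_def by blast
    hence wq: "w \<in> Psites (1 - P)" using nbr_par[OF P V] by blast
    hence "par w = 1 - P" unfolding Psites_def by simp
    hence "par w \<noteq> P" using P by presburger
    moreover have "\<phi> w \<in> V" using cl[OF wn] wq w by blast
    ultimately show ?thesis unfolding g_def by simp
  qed
  have ginj: "inj_on g (A - Exc)"
  proof (rule inj_onI)
    fix w1 w2 assume w: "w1 \<in> A - Exc" "w2 \<in> A - Exc" and eq: "g w1 = g w2"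
    have q1: "par w1 \<noteq> P \<Longrightarrow> w1 \<in> Psites (1 - P) - Exc"
    proof -
      assume "par w1 \<noteq> P"
      hence "w1 \<notin> V" using V unfolding Psites_def by blast
      hence "w1 \<in> nbr V" using w(1) unfolding A_def by blast
      thus ?thesis using nbr_par[OF P V] w(1) by blast
    qed
    have q2: "par w2 \<noteq> P \<Longrightarrow> w2 \<in> Psites (1 - P) - Exc"
    proof -
      assume "par w2 \<noteq> P"
      hence "w2 \<notin> V" using V unfolding Psites_def by blast
      hence "w2 \<in> nbr V" using w(2) unfolding A_def by blast
      thus ?thesis using nbr_par[OF P V] w(2) by blast
    qed
    have sw: "w1 \<in> \<sigma>" "w2 \<in> \<sigma>" using w unfolding A_def by auto
    show "w1 = w2"
    proof (cases "par w1 = P")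
      case T1: True
      show ?thesis
      proof (cases "par w2 = P")
        case True thus ?thesis using eq T1 unfolding g_def by simp
      next
        case False
        hence "w1 = \<phi> w2" using eq T1 unfolding g_def by simp
        hence "cyl_adj K w2 w1" using phi q2 False by blast
        thus ?thesis using indep[OF s sw(2) sw(1)] by blast
      qed
    next
      case F1: False
      show ?thesis
      proof (cases "par w2 = P")
        case True
        hence "w2 = \<phi> w1" using eq F1 unfolding g_def by simp
        hence "cyl_adj K w1 w2" using phi q1 F1 by blast
        thus ?thesis using indep[OF s sw(1) sw(2)] by blast
      next
        case False
        hence "\<phi> w1 = \<phi> w2" using eq F1 unfolding g_def by simp
        thus ?thesis using phinj q1 q2 F1 False unfolding inj_on_def by blast
      qed
    qed
  qed
  have c5: "card (A - Exc) \<le> card V"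
    using card_inj_on_le[OF ginj _ fV] gV by blast
  show ?thesis using c1 c2 c3 c4 c5 by linarith
qed

lemma tau_empty: "tau \<sigma> {} = \<sigma>" unfolding tau_def nbr_def by simp

lemma nbr_insert: "nbr (insert v V) = nbr {v} \<union> nbr V" unfolding nbr_def by blast

lemma tau_insert: "P \<le> 1 \<Longrightarrow> V \<subseteq> Psites P \<Longrightarrow> v \<in> Psites P \<Longrightarrow>
   tau \<sigma> (insert v V) = insert v (tau \<sigma> V - nbr {v})"
proof -
  assume P: "P \<le> 1" and V: "V \<subseteq> Psites P" and v: "v \<in> Psites P"
  have "nbr {v} \<subseteq> Psites (1 - P)" using nbr_par[OF P, of "{v}"] v by blast
  moreover have "Psites P \<inter> Psites (1 - P) = {}"
  proof (rule ccontr)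
    assume "Psites P \<inter> Psites (1 - P) \<noteq> {}"
    then obtain x where "x \<in> Psites P" "x \<in> Psites (1 - P)" by blast
    hence "par x = P" "par x = 1 - P" unfolding Psites_def by simp_all
    thus False using P by presburger
  qed
  ultimately have d: "V \<inter> nbr {v} = {}" "v \<notin> nbr {v}" using V v by blast+
  show ?thesis unfolding tau_def nbr_insert[of v V] using d by blast
qed

lemma sweep_step:
  assumes s: "\<sigma> \<in> hc_X K L" and P: "P \<le> 1" and V: "V \<subseteq> Psites P" and v: "v \<in> Psites P"
  and bd: "card \<sigma> \<le> card (tau \<sigma> (insert v V)) + d"
  shows "RE (hc_H \<sigma> + int d + 1) (tau \<sigma> V) (tau \<sigma> (insert v V))"
proof -
  define \<tau> where "\<tau> = tau \<sigma> V"
  define R where "R = \<tau> \<inter> nbr {v}"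
  have tX: "\<tau> \<in> hc_X K L" unfolding \<tau>_def by (rule tau_X[OF s V])
  have ft: "finite \<tau>" using fin_conf[OF tX] .
  have RS: "R \<subseteq> \<tau>" unfolding R_def by blast
  have fR: "finite R" using ft unfolding R_def by simp
  have t': "tau \<sigma> (insert v V) = insert v (\<tau> - R)" unfolding \<tau>_def R_def using tau_insert[OF P V v] by blast
  have iX: "insert v V \<subseteq> Psites P" using V v by blast
  have t'X: "insert v (\<tau> - R) \<in> hc_X K L" using tau_X[OF s iX] t' by simp
  have cR: "card (\<tau> - R) = card \<tau> - card R" using card_Diff_subset[OF fR RS] .
  have cR2: "card R \<le> card \<tau>" using card_mono[OF ft RS] .
  have ci: "card (insert v (\<tau> - R)) \<le> card (\<tau> - R) + 1" using card_insert_le_m1 ft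
    by (simp add: card_insert_if)
  have bd': "card \<sigma> \<le> card (insert v (\<tau> - R)) + d" using bd t' by simp
  have hR: "hc_H \<tau> + int (card R) \<le> hc_H \<sigma> + int d + 1"
    using bd' cR cR2 ci unfolding hc_H_def by linarith
  have r1: "RE (hc_H \<sigma> + int d + 1) \<tau> (\<tau> - R)"
    using reach_mono[OF reach_remove[OF tX fR RS] hR] .
  show ?thesis
  proof (cases "v \<in> \<tau> - R")
    case True
    hence "insert v (\<tau> - R) = \<tau> - R" by blast
    thus ?thesis using r1 t' unfolding \<tau>_def by simp
  next
    case False
    have "hc_q K L (\<tau> - R) (insert v (\<tau> - R)) > 0" using q_pos ndiff_ins[OF False] by blast
    moreover have "hc_H (insert v (\<tau> - R)) \<le> hc_H \<sigma> + int d + 1"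
      using bd' unfolding hc_H_def by linarith
    ultimately show ?thesis using reach_step[OF r1 t'X] t' unfolding \<tau>_def by simp
  qed
qed

lemma has_nbr: "w \<in> sites K L \<Longrightarrow> \<exists>u\<in>sites K L. cyl_adj K u w"
proof -
  assume w: "w \<in> sites K L"
  obtain c r where cr: "w = (c,r)" by (cases w) auto
  have b: "c < L" "r < K" using w cr unfolding sites_def by auto
  show ?thesis
  proof (cases "Suc r < K")
    case True
    have "cyl_adj K (c, Suc r) w" unfolding cyl_adj_def cr by simp
    moreover have "(c, Suc r) \<in> sites K L" using b True unfolding sites_def by simp
    ultimately show ?thesis by blast
  next
    case False
    hence "r = K - 1" using b by simp
    hence "{0, r} = {0, K - 1}" by simp
    hence "cyl_adj K (c, 0) w" unfolding cyl_adj_def cr fst_conv snd_conv by blast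
    moreover have "(c, 0) \<in> sites K L" using b K2 unfolding sites_def by simp
    ultimately show ?thesis by blast
  qed
qed

lemma tau_all: "\<sigma> \<in> hc_X K L \<Longrightarrow> P \<le> 1 \<Longrightarrow> tau \<sigma> (Psites P) = Psites P"
proof -
  assume s: "\<sigma> \<in> hc_X K L" and P: "P \<le> 1"
  have "\<sigma> - nbr (Psites P) \<subseteq> Psites P"
  proof
    fix w assume w: "w \<in> \<sigma> - nbr (Psites P)"
    have ws: "w \<in> sites K L" using w s unfolding X_iff by blast
    show "w \<in> Psites P"
    proof (rule ccontr)
      assume "w \<notin> Psites P"
      hence pw: "par w \<noteq> P" using ws unfolding Psites_def by simp
      obtain u where u: "u \<in> sites K L" "cyl_adj K u w" using has_nbr[OF ws] by blast
      have "par u \<noteq> par w" using adj_par[OF u(2)] .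
      hence "par u = P" using pw P par_le[of u] par_le[of w] by linarith
      hence "u \<in> Psites P" using u(1) unfolding Psites_def by simp
      hence "w \<in> nbr (Psites P)" using u ws unfolding nbr_def by blast
      thus False using w by blast
    qed
  qed
  thus ?thesis unfolding tau_def by blast
qed

lemma Psites_fin: "finite (Psites P)"
proof -
  have "Psites P \<subseteq> sites K L" unfolding Psites_def by blast
  thus ?thesis using finite_subset sites_fin by blast
qed

lemma sweep:
  fixes \<rho> :: "nat \<times> nat \<Rightarrow> nat" and \<phi> :: "nat \<times> nat \<Rightarrow> nat \<times> nat"
  assumes s: "\<sigma> \<in> hc_X K L" and P: "P \<le> 1"
  and rk: "inj_on \<rho> (Psites P)"
  and phi: "\<And>w. w \<in> Psites (1-P) - Exc \<Longrightarrow> \<phi> w \<in> Psites P \<and> cyl_adj K w (\<phi> w)"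
  and phinj: "inj_on \<phi> (Psites (1-P) - Exc)"
  and ord: "\<And>w v. w \<in> Psites (1-P) - Exc \<Longrightarrow> v \<in> Psites P \<Longrightarrow> cyl_adj K v w \<Longrightarrow> \<rho> (\<phi> w) \<le> \<rho> v"
  shows "RE (hc_H \<sigma> + int (card (\<sigma> \<inter> Exc)) + 1) \<sigma> (Psites P)"
proof -
  define V where "V t = {v \<in> Psites P. \<rho> v < t}" for t
  define d where "d = card (\<sigma> \<inter> Exc)"
  have VP: "V t \<subseteq> Psites P" for t unfolding V_def by blast
  have cl: "\<phi> w \<in> V t" if w: "w \<in> nbr (V t)" "w \<in> Psites (1-P) - Exc" for t w
  proof -
    obtain v where v: "v \<in> V t" "cyl_adj K v w" using w(1) unfolding nbr_def by blast
    have "\<rho> (\<phi> w) \<le> \<rho> v" using ord[OF w(2) _ v(2)] v(1) unfolding V_def by blast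
    moreover have "\<rho> v < t" using v(1) unfolding V_def by blast
    ultimately have "\<rho> (\<phi> w) < t" by linarith
    thus ?thesis using phi[OF w(2)] unfolding V_def by simp
  qed
  have bnd: "card \<sigma> \<le> card (tau \<sigma> (V t)) + d" for t
    unfolding d_def by (rule tau_bound[OF s P VP phi phinj cl]) auto
  have main: "RE (hc_H \<sigma> + int d + 1) \<sigma> (tau \<sigma> (V t))" for t
  proof (induction t)
    case 0
    have "V 0 = {}" unfolding V_def by simp
    thus ?case using tau_empty reach_refl[OF s] by simp
  next
    case (Suc t)
    show ?case
    proof (cases "\<exists>v\<in>Psites P. \<rho> v = t")
      case True
      then obtain v where v: "v \<in> Psites P" "\<rho> v = t" by blast
      have "V (Suc t) = insert v (V t)"
      proof (rule set_eqI, rule iffI)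
        fix x assume "x \<in> V (Suc t)"
        hence x: "x \<in> Psites P" "\<rho> x < Suc t" unfolding V_def by auto
        show "x \<in> insert v (V t)"
        proof (cases "\<rho> x = t")
          case True
          hence "x = v" using rk x(1) v unfolding inj_on_def by metis
          thus ?thesis by simp
        next
          case False thus ?thesis using x unfolding V_def by simp
        qed
      next
        fix x assume "x \<in> insert v (V t)"
        thus "x \<in> V (Suc t)" using v unfolding V_def by auto
      qed
      moreover have "RE (hc_H \<sigma> + int d + 1) (tau \<sigma> (V t)) (tau \<sigma> (insert v (V t)))"
        using sweep_step[OF s P VP[of t] v(1)] bnd[of "Suc t"] calculation by simp
      ultimately show ?thesis using reach_trans[OF Suc.IH] by simp
    next
      case False
      hence "V (Suc t) = V t" unfolding V_def using less_Suc_eq by auto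
      thus ?thesis using Suc.IH by simp
    qed
  qed
  define T where "T = Suc (Max (insert 0 (\<rho> ` Psites P)))"
  have "V T = Psites P"
  proof -
    have "\<rho> v < T" if "v \<in> Psites P" for v
    proof -
      have "\<rho> v \<le> Max (insert 0 (\<rho> ` Psites P))" using that Psites_fin by simp
      thus ?thesis unfolding T_def by simp
    qed
    thus ?thesis unfolding V_def by blast
  qed
  thus ?thesis using main[of T] tau_all[OF s P] unfolding d_def by simp
qed

end

context grid begin

lemma adj_cases: "cyl_adj K (a1,a2) (b1,b2) \<Longrightarrow>
  (a1 = b1 \<and> (a2 = b2+1 \<or> b2 = a2+1)) \<or> (a2 = b2 \<and> (a1 = b1+1 \<or> b1 = a1+1)) \<or>
  (a1 = b1 \<and> {a2,b2} = {0,K-1})"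
proof -
  assume a: "cyl_adj K (a1,a2) (b1,b2)"
  show ?thesis
  proof (cases "\<bar>int a1 - int b1\<bar> + \<bar>int a2 - int b2\<bar> = 1")
    case True
    hence "(a1 = b1 \<and> (a2 = b2 + 1 \<or> b2 = a2 + 1)) \<or> (a2 = b2 \<and> (a1 = b1 + 1 \<or> b1 = a1 + 1))"
      by linarith
    thus ?thesis by blast
  next
    case False
    thus ?thesis using a unfolding cyl_adj_def by auto
  qed
qed

lemma par_adj_other: "P \<le> 1 \<Longrightarrow> par w = 1 - P \<Longrightarrow> cyl_adj K w u \<Longrightarrow> par u = P"
proof -
  assume a: "P \<le> 1" "par w = 1 - P" "cyl_adj K w u"
  have "par w \<noteq> par u" using adj_par[OF a(3)] .
  thus ?thesis using a(1,2) par_le[of u] by linarith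
qed

lemma par0: "par v = 0 \<longleftrightarrow> even (fst v + snd v)" unfolding par_def by presburger
lemma par1: "par v = 1 \<longleftrightarrow> odd (fst v + snd v)" unfolding par_def by presburger
lemma Psites_e: "Psites 0 = even_conf K L"
  unfolding Psites_def even_conf_def par0 ..
lemma Psites_o: "Psites 1 = odd_conf K L"
  unfolding Psites_def odd_conf_def par1 ..

lemma divmod_inj: "(a::nat) * M + b = c * M + d \<Longrightarrow> b < M \<Longrightarrow> d < M \<Longrightarrow> a = c \<and> b = d"
proof -
  assume e: "a * M + b = c * M + d" and b: "b < M" "d < M"
  have "(a * M + b) div M = a" using b by simp
  moreover have "(c * M + d) div M = c" using b by simp
  moreover have "(a * M + b) mod M = b" using b by simp
  moreover have "(c * M + d) mod M = d" using b by simp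
  ultimately show ?thesis using e by metis
qed

definition ExcC :: "nat \<Rightarrow> (nat \<times> nat) set" where "ExcC P = {w \<in> Psites (1-P). fst w = 0}"
definition ExcR :: "nat \<Rightarrow> (nat \<times> nat) set" where "ExcR P = {w \<in> Psites (1-P). snd w = 0 \<or> snd w = K - 1}"

lemma col_sweep:
  assumes s: "\<sigma> \<in> hc_X K L" and P: "P \<le> 1"
  shows "RE (hc_H \<sigma> + int (card (\<sigma> \<inter> ExcC P)) + 1) \<sigma> (Psites P)"
proof (rule sweep[OF s P, of "\<lambda>v. fst v * K + snd v" _ "\<lambda>w. (fst w - 1, snd w)"])
  show "inj_on (\<lambda>v. fst v * K + snd v) (Psites P)"
  proof (rule inj_onI)
    fix v w assume vw: "v \<in> Psites P" "w \<in> Psites P" "fst v * K + snd v = fst w * K + snd w"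
    have "snd v < K" "snd w < K" using vw unfolding Psites_def sites_def by auto
    hence "fst v = fst w \<and> snd v = snd w" using divmod_inj[OF vw(3)] by blast
    thus "v = w" by (simp add: prod_eq_iff)
  qed
next
  fix w assume w: "w \<in> Psites (1 - P) - ExcC P"
  obtain c r where cr: "w = (c,r)" by (cases w) auto
  have b: "c < L" "r < K" "c \<noteq> 0" "par w = 1 - P" using w cr unfolding ExcC_def Psites_def sites_def by auto
  have adj: "cyl_adj K w (c - 1, r)" unfolding cyl_adj_def cr using b(3) by simp
  have "(c - 1, r) \<in> sites K L" using b unfolding sites_def by simp
  moreover have "par (c - 1, r) = P" using par_adj_other[OF P b(4) adj] .
  ultimately show "(fst w - 1, snd w) \<in> Psites P \<and> cyl_adj K w (fst w - 1, snd w)"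
    using adj unfolding Psites_def cr by simp
next
  show "inj_on (\<lambda>w. (fst w - 1, snd w)) (Psites (1 - P) - ExcC P)"
  proof (rule inj_onI)
    fix v w assume vw: "v \<in> Psites (1 - P) - ExcC P" "w \<in> Psites (1 - P) - ExcC P"
      "(fst v - 1, snd v) = (fst w - 1, snd w)"
    have "fst v \<noteq> 0" "fst w \<noteq> 0" using vw(1,2) unfolding ExcC_def by auto
    hence "fst v = fst w" "snd v = snd w" using vw(3) by auto
    thus "v = w" by (simp add: prod_eq_iff)
  qed
next
  fix w v assume w: "w \<in> Psites (1 - P) - ExcC P" and v: "v \<in> Psites P" and a: "cyl_adj K v w"
  obtain c r where cr: "w = (c,r)" by (cases w) auto
  obtain c' r' where cr': "v = (c',r')" by (cases v) auto
  have b: "r < K" "c \<noteq> 0" using w cr unfolding ExcC_def Psites_def sites_def by auto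
  have a': "(c' = c \<and> (r' = r+1 \<or> r = r'+1)) \<or> (r' = r \<and> (c' = c+1 \<or> c = c'+1)) \<or> (c' = c \<and> {r',r} = {0,K-1})"
    using adj_cases a cr cr' by simp
  hence cs: "c \<le> c' \<or> (c = c' + 1 \<and> r' = r)" by auto
  show "fst (fst w - 1, snd w) * K + snd (fst w - 1, snd w) \<le> fst v * K + snd v"
  proof (cases "c \<le> c'")
    case True
    have e1: "(c - 1) * K + K = c * K" using b(2) by (cases c) auto
    have m1: "c * K \<le> c' * K" using True by (rule mult_le_mono1)
    have "(c - 1) * K + r \<le> c' * K + r'" using e1 m1 b(1) by linarith
    thus ?thesis using cr cr' by simp
  next
    case False
    hence "c = c' + 1" "r' = r" using cs by auto
    thus ?thesis using cr cr' by simp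
  qed
qed

lemma ExcC_card: "card (ExcC P) \<le> n"
proof -
  have "ExcC P \<subseteq> (\<lambda>i. (0, 2*i + (1 - P) mod 2)) ` {0..<n}"
  proof
    fix w assume w: "w \<in> ExcC P"
    obtain c r where cr: "w = (c,r)" by (cases w) auto
    have b: "c = 0" "r < K" "par w = 1 - P" using w cr unfolding ExcC_def Psites_def sites_def by auto
    have "r mod 2 = (1 - P) mod 2" using b(1,3) cr unfolding par_def by simp
    moreover have "r = 2 * (r div 2) + r mod 2" by (rule mult_div_mod_eq[symmetric])
    ultimately have r: "r = 2 * (r div 2) + (1 - P) mod 2" by simp
    have "r div 2 \<in> {0..<n}" using b(2) K_eq by simp
    moreover have "w = (\<lambda>i. (0, 2*i + (1 - P) mod 2)) (r div 2)" using cr b(1) r by simp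
    ultimately show "w \<in> (\<lambda>i. (0, 2*i + (1 - P) mod 2)) ` {0..<n}" by (rule rev_image_eqI)
  qed
  hence "card (ExcC P) \<le> card ((\<lambda>i. (0::nat, 2*i + (1 - P) mod 2)) ` {0..<n})"
    by (rule card_mono[OF finite_imageI[OF finite_atLeastLessThan]])
  also have "\<dots> \<le> n" using card_image_le[of "{0..<n}"] by simp
  finally show ?thesis .
qed

lemma ExcC_fin: "finite (ExcC P)"
  unfolding ExcC_def using Psites_fin by simp

end

context grid begin

lemma wrap0: "cyl_adj K (c, K - 1) (c, 0)"
proof -
  have "{K - 1, 0} = {0, K - 1}" by (rule insert_commute)
  thus ?thesis unfolding cyl_adj_def fst_conv snd_conv by blast
qed

lemma row_sweep:
  assumes s: "\<sigma> \<in> hc_X K L" and P: "P \<le> 1"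
  shows "RE (hc_H \<sigma> + int (card (\<sigma> \<inter> ExcR P)) + 1) \<sigma> (Psites P)"
proof (rule sweep[OF s P, of "\<lambda>v. snd v * L + fst v" _ "\<lambda>w. (fst w, snd w - 1)"])
  show "inj_on (\<lambda>v. snd v * L + fst v) (Psites P)"
  proof (rule inj_onI)
    fix v w assume vw: "v \<in> Psites P" "w \<in> Psites P" "snd v * L + fst v = snd w * L + fst w"
    have "fst v < L" "fst w < L" using vw unfolding Psites_def sites_def by auto
    hence "snd v = snd w \<and> fst v = fst w" using divmod_inj[OF vw(3)] by blast
    thus "v = w" by (simp add: prod_eq_iff)
  qed
next
  fix w assume w: "w \<in> Psites (1 - P) - ExcR P"
  obtain c r where cr: "w = (c,r)" by (cases w) auto
  have b: "c < L" "r < K" "r \<noteq> 0" "par w = 1 - P" using w cr unfolding ExcR_def Psites_def sites_def by auto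
  have adj: "cyl_adj K w (c, r - 1)" unfolding cyl_adj_def cr using b(3) by simp
  have "(c, r - 1) \<in> sites K L" using b unfolding sites_def by simp
  moreover have "par (c, r - 1) = P" using par_adj_other[OF P b(4) adj] .
  ultimately show "(fst w, snd w - 1) \<in> Psites P \<and> cyl_adj K w (fst w, snd w - 1)"
    using adj unfolding Psites_def cr by simp
next
  show "inj_on (\<lambda>w. (fst w, snd w - 1)) (Psites (1 - P) - ExcR P)"
  proof (rule inj_onI)
    fix v w assume vw: "v \<in> Psites (1 - P) - ExcR P" "w \<in> Psites (1 - P) - ExcR P"
      "(fst v, snd v - 1) = (fst w, snd w - 1)"
    have "snd v \<noteq> 0" "snd w \<noteq> 0" using vw(1,2) unfolding ExcR_def by auto
    hence "fst v = fst w" "snd v = snd w" using vw(3) by auto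
    thus "v = w" by (simp add: prod_eq_iff)
  qed
next
  fix w v assume w: "w \<in> Psites (1 - P) - ExcR P" and v: "v \<in> Psites P" and a: "cyl_adj K v w"
  obtain c r where cr: "w = (c,r)" by (cases w) auto
  obtain c' r' where cr': "v = (c',r')" by (cases v) auto
  have b: "c < L" "r \<noteq> 0" "r \<noteq> K - 1" using w cr unfolding ExcR_def Psites_def sites_def by auto
  have a': "(c' = c \<and> (r' = r+1 \<or> r = r'+1)) \<or> (r' = r \<and> (c' = c+1 \<or> c = c'+1)) \<or> (c' = c \<and> {r',r} = {0,K-1})"
    using adj_cases a cr cr' by simp
  have nw: "\<not> {r',r} = {0,K-1}" using b(2,3) by (auto simp: doubleton_eq_iff)
  hence cs: "r \<le> r' \<or> (r = r' + 1 \<and> c' = c)" using a' by auto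
  show "snd (fst w, snd w - 1) * L + fst (fst w, snd w - 1) \<le> snd v * L + fst v"
  proof (cases "r \<le> r'")
    case True
    have e1: "(r - 1) * L + L = r * L" using b(2) by (cases r) auto
    have m1: "r * L \<le> r' * L" using True by (rule mult_le_mono1)
    have "(r - 1) * L + c \<le> r' * L + c'" using e1 m1 b(1) by linarith
    thus ?thesis using cr cr' by simp
  next
    case False
    hence "r = r' + 1" "c' = c" using cs by auto
    thus ?thesis using cr cr' by simp
  qed
qed

lemma ExcR_card: "card (ExcR P) \<le> L"
proof -
  define g where "g c = (if par (c,0) = 1 - P then (c,0) else (c, K - 1))" for c
  have "ExcR P \<subseteq> g ` {0..<L}"
  proof
    fix w assume w: "w \<in> ExcR P"
    obtain c r where cr: "w = (c,r)" by (cases w) auto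
    have b: "c < L" "r = 0 \<or> r = K - 1" "par w = 1 - P" using w cr unfolding ExcR_def Psites_def sites_def by auto
    have "w = g c"
    proof (cases "r = 0")
      case True thus ?thesis using cr b(3) unfolding g_def by simp
    next
      case False
      hence r: "r = K - 1" using b(2) by simp
      have "par (c, K - 1) \<noteq> par (c, 0)" using adj_par[OF wrap0] .
      hence "par (c, 0) \<noteq> 1 - P" using b(3) cr r by simp
      thus ?thesis using cr r unfolding g_def by simp
    qed
    moreover have "c \<in> {0..<L}" using b(1) by simp
    ultimately show "w \<in> g ` {0..<L}" by (rule image_eqI)
  qed
  hence "card (ExcR P) \<le> card (g ` {0..<L})"
    by (rule card_mono[OF finite_imageI[OF finite_atLeastLessThan]])
  also have "\<dots> \<le> L" using card_image_le[of "{0..<L}" g] by simp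
  finally show ?thesis .
qed

lemma ExcR_fin: "finite (ExcR P)"
  unfolding ExcR_def using Psites_fin by simp

lemma card_lt: "finite E \<Longrightarrow> e0 \<in> E \<Longrightarrow> e0 \<notin> \<sigma> \<Longrightarrow> card (\<sigma> \<inter> E) < card E"
proof -
  assume a: "finite E" "e0 \<in> E" "e0 \<notin> \<sigma>"
  have "\<sigma> \<inter> E \<subset> E" using a by blast
  thus ?thesis using psubset_card_mono[OF a(1)] by blast
qed

lemma s00: "(0,0) \<in> sites K L" using K2 L2 unfolding sites_def by simp
lemma s01: "(0,1) \<in> sites K L" using K2 L2 unfolding sites_def by simp
lemma s0K: "(0,K-1) \<in> sites K L" using K2 L2 unfolding sites_def by simp

lemma par01: "par (0,1) = 1" unfolding par_def by simp
lemma par00: "par (0,0) = 0" unfolding par_def by simp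
lemma par0K: "par (0,K-1) = 1"
proof -
  have "K - 1 = Suc (2 * (n - 1))" using K_eq n_pos by simp
  thus ?thesis unfolding par_def by simp
qed

lemma adj0001: "cyl_adj K (0,0) (0,1)" unfolding cyl_adj_def by simp

lemma descent: "\<sigma> \<in> hc_X K L \<Longrightarrow> \<exists>P\<le>1. RE (hc_H \<sigma> + int m) \<sigma> (Psites P)"
proof -
  assume s: "\<sigma> \<in> hc_X K L"
  show ?thesis
  proof (cases "n \<le> L")
    case nL: True
    show ?thesis
    proof (cases "(0,1) \<in> \<sigma>")
      case False
      have "(0,1) \<in> ExcC 0" unfolding ExcC_def Psites_def using s01 par01 by simp
      hence "card (\<sigma> \<inter> ExcC 0) < card (ExcC 0)" using card_lt[OF ExcC_fin _ False] by blast
      hence c: "card (\<sigma> \<inter> ExcC 0) + 1 \<le> m" using ExcC_card[of 0] nL by simp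
      have "hc_H \<sigma> + int (card (\<sigma> \<inter> ExcC 0)) + 1 \<le> hc_H \<sigma> + int m" using c by linarith
      hence "RE (hc_H \<sigma> + int m) \<sigma> (Psites 0)" using reach_mono[OF col_sweep[OF s, of 0]] by blast
      thus ?thesis by blast
    next
      case True
      hence n00: "(0,0) \<notin> \<sigma>" using indep[OF s _ True] adj0001 by blast
      have "(0,0) \<in> ExcC 1" unfolding ExcC_def Psites_def using s00 par00 by simp
      hence "card (\<sigma> \<inter> ExcC 1) < card (ExcC 1)" using card_lt[OF ExcC_fin _ n00] by blast
      hence c: "card (\<sigma> \<inter> ExcC 1) + 1 \<le> m" using ExcC_card[of 1] nL by simp
      have "hc_H \<sigma> + int (card (\<sigma> \<inter> ExcC 1)) + 1 \<le> hc_H \<sigma> + int m" using c by linarith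
      hence "RE (hc_H \<sigma> + int m) \<sigma> (Psites 1)" using reach_mono[OF col_sweep[OF s, of 1]] by blast
      thus ?thesis by blast
    qed
  next
    case nL: False
    show ?thesis
    proof (cases "(0,K-1) \<in> \<sigma>")
      case False
      have "(0,K-1) \<in> ExcR 0" unfolding ExcR_def Psites_def using s0K par0K by simp
      hence "card (\<sigma> \<inter> ExcR 0) < card (ExcR 0)" using card_lt[OF ExcR_fin _ False] by blast
      hence c: "card (\<sigma> \<inter> ExcR 0) + 1 \<le> m" using ExcR_card[of 0] nL by simp
      have "hc_H \<sigma> + int (card (\<sigma> \<inter> ExcR 0)) + 1 \<le> hc_H \<sigma> + int m" using c by linarith
      hence "RE (hc_H \<sigma> + int m) \<sigma> (Psites 0)" using reach_mono[OF row_sweep[OF s, of 0]] by blast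
      thus ?thesis by blast
    next
      case True
      hence n00: "(0,0) \<notin> \<sigma>" using indep[OF s True] wrap0 by blast
      have "(0,0) \<in> ExcR 1" unfolding ExcR_def Psites_def using s00 par00 by simp
      hence "card (\<sigma> \<inter> ExcR 1) < card (ExcR 1)" using card_lt[OF ExcR_fin _ n00] by blast
      hence c: "card (\<sigma> \<inter> ExcR 1) + 1 \<le> m" using ExcR_card[of 1] nL by simp
      have "hc_H \<sigma> + int (card (\<sigma> \<inter> ExcR 1)) + 1 \<le> hc_H \<sigma> + int m" using c by linarith
      hence "RE (hc_H \<sigma> + int m) \<sigma> (Psites 1)" using reach_mono[OF row_sweep[OF s, of 1]] by blast
      thus ?thesis by blast
    qed
  qed
qed

lemma ref_path: "RE (hc_H (even_conf K L) + int m + 1) (even_conf K L) (odd_conf K L)"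
proof (cases "n \<le> L")
  case True
  have "card (even_conf K L \<inter> ExcC 1) \<le> card (ExcC 1)" by (rule card_mono[OF ExcC_fin]) blast
  hence c: "card (even_conf K L \<inter> ExcC 1) \<le> m" using ExcC_card[of 1] True by simp
  have "hc_H (even_conf K L) + int (card (even_conf K L \<inter> ExcC 1)) + 1 \<le> hc_H (even_conf K L) + int m + 1"
    using c by linarith
  thus ?thesis using reach_mono[OF col_sweep[OF e_X, of 1]] Psites_o by simp
next
  case False
  have "card (even_conf K L \<inter> ExcR 1) \<le> card (ExcR 1)" by (rule card_mono[OF ExcR_fin]) blast
  hence c: "card (even_conf K L \<inter> ExcR 1) \<le> m" using ExcR_card[of 1] False by simp
  have "hc_H (even_conf K L) + int (card (even_conf K L \<inter> ExcR 1)) + 1 \<le> hc_H (even_conf K L) + int m + 1"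
    using c by linarith
  thus ?thesis using reach_mono[OF row_sweep[OF e_X, of 1]] Psites_o by simp
qed

end

context grid begin

lemma Phi_eo: "Phi (hc_X K L) hc_H (hc_q K L) (even_conf K L) (odd_conf K L) = hc_H (even_conf K L) + int m + 1"
  using Phi_le[OF ref_path] Phi_lb by linarith

lemma LS_inst: "LS (hc_X K L) hc_H (hc_q K L)"
  by unfold_locales (use X_fin q_sym conn in auto)

lemma main: "GammaTilde (hc_X K L) hc_H (hc_q K L) (hc_X K L - {even_conf K L, odd_conf K L}) \<le> int m \<and>
   GammaA (hc_X K L) hc_H (hc_q K L) (even_conf K L) {odd_conf K L} = int m + 1 \<and>
   GammaTilde (hc_X K L) hc_H (hc_q K L) (hc_X K L - {odd_conf K L}) = int m + 1"
proof -
  have ax: "LS2_axioms (hc_X K L) hc_H (hc_q K L) (even_conf K L) (odd_conf K L)"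
    unfolding LS2_axioms_def using e_X o_X e_min Phi_eo by simp
  interpret Q: LS2 "hc_X K L" hc_H "hc_q K L" "even_conf K L" "odd_conf K L"
    by (rule LS2.intro[OF LS_inst ax])
  have desc: "\<exists>y\<in>{even_conf K L, odd_conf K L}. Phi (hc_X K L) hc_H (hc_q K L) x y \<le> hc_H x + int m"
    if x: "x \<in> hc_X K L" for x
  proof -
    obtain P where P: "P \<le> 1" "RE (hc_H x + int m) x (Psites P)" using descent[OF x] by blast
    have "P = 0 \<or> P = 1" using P(1) by auto
    hence "Psites P \<in> {even_conf K L, odd_conf K L}" using Psites_e Psites_o by auto
    thus ?thesis using Phi_le[OF P(2)] by blast
  qed
  have x0: "{} \<in> hc_X K L" unfolding X_iff by simp
  have "evs 0 0 \<in> even_conf K L" using evs_e L2 n_pos by simp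
  hence ne: "{} \<noteq> even_conf K L" by blast
  have "ods 0 0 \<in> odd_conf K L" using ods_o L2 n_pos by simp
  hence no: "{} \<noteq> odd_conf K L" by blast
  have hb: "Phi (hc_X K L) hc_H (hc_q K L) (even_conf K L) (odd_conf K L) - hc_H (even_conf K L) = int m + 1"
    using Phi_eo by simp
  show ?thesis using Q.final_parts[OF desc hb x0 ne no] by blast
qed

end

theorem theorem5p3:
  fixes K L :: nat
  assumes "K \<ge> 2" and "L \<ge> 2" and "even K"
  shows "GammaTilde (hc_X K L) hc_H (hc_q K L) (hc_X K L - {even_conf K L, odd_conf K L})
           \<le> min (int K div 2) (int L) \<and>
         GammaA (hc_X K L) hc_H (hc_q K L) (even_conf K L) {odd_conf K L}
           = min (int K div 2) (int L) + 1 \<and>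
         GammaTilde (hc_X K L) hc_H (hc_q K L) (hc_X K L - {odd_conf K L})
           = min (int K div 2) (int L) + 1"
proof -
  interpret grid K L using assms by unfold_locales
  have k: "int K div 2 = int (K div 2)" by (simp add: zdiv_int)
  have e: "int (min (K div 2) L) = min (int K div 2) (int L)"
    unfolding k by (cases "K div 2 \<le> L") (simp_all add: min_def)
  show ?thesis using main unfolding e .
qed

end
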